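(* Let $k\ge1$ be an integer, $a,b,c,d\ge0$, and let $(\phi,\psi)$ be a solution of $\phi''-\phi+f(\phi,\psi)=0$, $\psi''-\psi+g(\phi,\psi)=0$. Then (i) $\|(\phi,\psi)\|^2+\|\partial_x(\phi,\psi)\|^2=(2k+2)P(\phi,\psi)$; (ii) $\|(\phi,\psi)\|^2-\|\partial_x(\phi,\psi)\|^2=2P(\phi,\psi)$; (iii) $\|\partial_x(\phi,\psi)\|^2=\frac{k}{k+2}\|(\phi,\psi)\|^2$; (iv) $P(\phi,\psi)=\frac1{k+2}\|(\phi,\psi)\|^2$; (v) $P(\phi,\psi)=\frac1k\|\partial_x(\phi,\psi)\|^2$. In particular, every nontrivial solution belongs to $\mathcal{P}$.
   Context: $H(u,v)=\frac{a}{2k+2}(u^{2k+2}+v^{2k+2})+\frac{b}{k+1}(uv)^{k+1}+\frac{c}{k}u^{k+2}v^k+\frac{d}{k}u^kv^{k+2}$, $f=H_u$, $g=H_v$; $P(u,v)=\int_{\mathbb{R}}H(u,v)dx$; $\|(u,v)\|^2=\|u\|_{L^2}^2+\|v\|_{L^2}^2$, $\|\partial_x(u,v)\|^2=\|u'\|_{L^2}^2+\|v'\|_{L^2}^2$; $\mathcal{P}=\{(u,v)\in H^1\times H^1\setminus\{(0,0)\}:P(u,v)>0\}$. A solution means $(\phi,\psi)\in H^1(\mathbb{R})\times H^1(\mathbb{R})$ with $\int(\phi w+\phi'w'-f(\phi,\psi)w)dx=0$ and $\int(\psi z+\psi'z'-g(\phi,\psi)z)dx=0$ for all $w,z\in H^1(\mathbb{R})$.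 *)

theory Defs
  imports "HOL-Analysis.Analysis"
begin

definition H :: "nat \<Rightarrow> real \<Rightarrow> real \<Rightarrow> real \<Rightarrow> real \<Rightarrow> real \<Rightarrow> real \<Rightarrow> real" where
  "H k a b c d u v =
     a / (2 * real k + 2) * (u ^ (2*k+2) + v ^ (2*k+2))
   + b / (real k + 1) * (u * v) ^ (k+1)
   + c / real k * u ^ (k+2) * v ^ k
   + d / real k * u ^ k * v ^ (k+2)"

definition f :: "nat \<Rightarrow> real \<Rightarrow> real \<Rightarrow> real \<Rightarrow> real \<Rightarrow> real \<Rightarrow> real \<Rightarrow> real" where
  "f k a b c d u v = deriv (\<lambda>s. H k a b c d s v) u"

definition g :: "nat \<Rightarrow> real \<Rightarrow> real \<Rightarrow> real \<Rightarrow> real \<Rightarrow> real \<Rightarrow> real \<Rightarrow> real" where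
  "g k a b c d u v = deriv (\<lambda>t. H k a b c d u t) v"

definition test_fun :: "(real \<Rightarrow> real) \<Rightarrow> bool" where
  "test_fun w \<longleftrightarrow>
     (\<exists>D :: nat \<Rightarrow> real \<Rightarrow> real. D 0 = w \<and>
        (\<forall>n x. (D n has_real_derivative D (Suc n) x) (at x))) \<and>
     (\<exists>R. \<forall>x. \<bar>x\<bar> > R \<longrightarrow> w x = 0)"

definition L2 :: "(real \<Rightarrow> real) \<Rightarrow> bool" where
  "L2 u \<longleftrightarrow> u \<in> borel_measurable lborel \<and> integrable lborel (\<lambda>x. (u x)\<^sup>2)"

definition H1_with_deriv :: "(real \<Rightarrow> real) \<Rightarrow> (real \<Rightarrow> real) \<Rightarrow> bool" where
  "H1_with_deriv u u' \<longleftrightarrow> L2 u \<and> L2 u' \<and>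
     (\<forall>w. test_fun w \<longrightarrow>
        integral\<^sup>L lborel (\<lambda>x. u x * deriv w x) = - integral\<^sup>L lborel (\<lambda>x. u' x * w x))"

definition H1 :: "(real \<Rightarrow> real) \<Rightarrow> bool" where
  "H1 u \<longleftrightarrow> (\<exists>u'. H1_with_deriv u u')"

definition norm2 :: "(real \<Rightarrow> real) \<Rightarrow> (real \<Rightarrow> real) \<Rightarrow> real" where
  "norm2 u v = integral\<^sup>L lborel (\<lambda>x. (u x)\<^sup>2) + integral\<^sup>L lborel (\<lambda>x. (v x)\<^sup>2)"

definition P :: "nat \<Rightarrow> real \<Rightarrow> real \<Rightarrow> real \<Rightarrow> real \<Rightarrow> (real \<Rightarrow> real) \<Rightarrow> (real \<Rightarrow> real) \<Rightarrow> real" where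
  "P k a b c d u v = integral\<^sup>L lborel (\<lambda>x. H k a b c d (u x) (v x))"

text \<open>The set \<P>: nonzero pairs in H^1 x H^1 with P(u,v) > 0 (zero as an element of L^2, i.e. a.e.).\<close>
definition in_calP :: "nat \<Rightarrow> real \<Rightarrow> real \<Rightarrow> real \<Rightarrow> real \<Rightarrow> (real \<Rightarrow> real) \<Rightarrow> (real \<Rightarrow> real) \<Rightarrow> bool" where
  "in_calP k a b c d u v \<longleftrightarrow> H1 u \<and> H1 v \<and>
     \<not> (AE x in lborel. u x = 0 \<and> v x = 0) \<and> P k a b c d u v > 0"

definition is_solution :: "nat \<Rightarrow> real \<Rightarrow> real \<Rightarrow> real \<Rightarrow> real \<Rightarrow>
    (real \<Rightarrow> real) \<Rightarrow> (real \<Rightarrow> real) \<Rightarrow> (real \<Rightarrow> real) \<Rightarrow> (real \<Rightarrow> real) \<Rightarrow> bool" where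
  "is_solution k a b c d \<phi> \<phi>' \<psi> \<psi>' \<longleftrightarrow>
     H1_with_deriv \<phi> \<phi>' \<and> H1_with_deriv \<psi> \<psi>' \<and>
     (\<forall>w w'. H1_with_deriv w w' \<longrightarrow>
        integral\<^sup>L lborel (\<lambda>x. \<phi> x * w x + \<phi>' x * w' x - f k a b c d (\<phi> x) (\<psi> x) * w x) = 0) \<and>
     (\<forall>z z'. H1_with_deriv z z' \<longrightarrow>
        integral\<^sup>L lborel (\<lambda>x. \<psi> x * z x + \<psi>' x * z' x - g k a b c d (\<phi> x) (\<psi> x) * z x) = 0)"

end

theory Submission
  imports Defs
begin

fun Cn :: "nat \<Rightarrow> (real \<Rightarrow> real) \<Rightarrow> bool" where
  "Cn 0 u = True"
| "Cn (Suc n) u = ((\<forall>x. u differentiable (at x)) \<and> Cn n (deriv u))"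

lemma deriv_eqI: assumes "\<And>x. (u has_real_derivative u' x) (at x)" shows "deriv u = u'"
  using assms DERIV_imp_deriv by blast

lemma Cn_Suc_mono: "Cn (Suc n) u \<Longrightarrow> Cn n u"
  by (induction n arbitrary: u) auto

lemma Cn_derivs: "Cn (Suc n) u \<Longrightarrow> (u has_real_derivative deriv u x) (at x)"
  using DERIV_deriv_iff_real_differentiable by auto

lemma Cn_const: "Cn n (\<lambda>x. c)"
proof (induction n arbitrary: c)
  case (Suc n) have "deriv (\<lambda>x. c) = (\<lambda>x. 0)" by (rule deriv_eqI) auto
  then show ?case using Suc by simp
qed simp

lemma Cn_add: "Cn n u \<Longrightarrow> Cn n v \<Longrightarrow> Cn n (\<lambda>x. u x + v x)"
proof (induction n arbitrary: u v)
  case (Suc n)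
  have df: "\<And>x. (u has_real_derivative deriv u x) (at x)" using Suc.prems(1) Cn_derivs by blast
  have dg: "\<And>x. (v has_real_derivative deriv v x) (at x)" using Suc.prems(2) Cn_derivs by blast
  have "deriv (\<lambda>x. u x + v x) = (\<lambda>x. deriv u x + deriv v x)"
    by (rule deriv_eqI) (intro DERIV_add df dg)
  moreover have "\<forall>x. (\<lambda>x. u x + v x) differentiable at x"
    using df dg real_differentiable_def DERIV_add by blast
  ultimately show ?case using Suc by simp
qed simp

lemma Cn_mult: "Cn n u \<Longrightarrow> Cn n v \<Longrightarrow> Cn n (\<lambda>x. u x * v x)"
proof (induction n arbitrary: u v)
  case (Suc n)
  have df: "\<And>x. (u has_real_derivative deriv u x) (at x)" using Suc.prems(1) Cn_derivs by blast
  have dg: "\<And>x. (v has_real_derivative deriv v x) (at x)" using Suc.prems(2) Cn_derivs by blast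
  have "deriv (\<lambda>x. u x * v x) = (\<lambda>x. deriv u x * v x + deriv v x * u x)"
    by (rule deriv_eqI) (intro DERIV_mult df dg)
  moreover have "\<forall>x. (\<lambda>x. u x * v x) differentiable at x"
    using df dg real_differentiable_def DERIV_mult by blast
  moreover have "Cn n (\<lambda>x. deriv u x * v x + deriv v x * u x)"
    using Suc by (intro Cn_add Suc.IH) (auto intro: Cn_Suc_mono)
  ultimately show ?case by simp
qed simp

lemma Cn_affine: "Cn n u \<Longrightarrow> Cn n (\<lambda>x. u (\<alpha> * x + \<beta>))"
proof (induction n arbitrary: u)
  case (Suc n)
  have df: "\<And>x. (u has_real_derivative deriv u x) (at x)" using Suc.prems(1) Cn_derivs by blast
  have d: "\<And>x. ((\<lambda>x. u (\<alpha> * x + \<beta>)) has_real_derivative deriv u (\<alpha> * x + \<beta>) * \<alpha>) (at x)"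
    by (rule DERIV_chain2[OF df]) (auto intro!: derivative_eq_intros)
  have "deriv (\<lambda>x. u (\<alpha> * x + \<beta>)) = (\<lambda>x. deriv u (\<alpha> * x + \<beta>) * \<alpha>)"
    by (rule deriv_eqI) (rule d)
  moreover have "\<forall>x. (\<lambda>x. u (\<alpha> * x + \<beta>)) differentiable at x"
    using d real_differentiable_def by blast
  moreover have "Cn n (\<lambda>x. deriv u (\<alpha> * x + \<beta>) * \<alpha>)"
    using Suc by (intro Cn_mult Cn_const) auto
  ultimately show ?case by simp
qed simp

definition expF :: "real poly \<Rightarrow> real \<Rightarrow> real" where
  "expF p x = (if 0 < x then poly p (1/x) * exp (-(1/x)) else 0)"

definition expQ :: "real poly \<Rightarrow> real poly" where
  "expQ p = pCons 0 (pCons 0 (p - pderiv p))"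

lemma poly_exp_lim: "((\<lambda>s. poly (r::real poly) s * exp (-s)) \<longlongrightarrow> 0) at_top"
proof -
  have "((\<lambda>s. \<Sum>i\<le>degree r. coeff r i * (s^i / exp s)) \<longlongrightarrow> 0) at_top"
    by (intro tendsto_null_sum tendsto_mult_right_zero tendsto_power_div_exp_0)
  moreover have "\<And>s. poly r s * exp (-s) = (\<Sum>i\<le>degree r. coeff r i * (s^i / exp s))"
    by (simp add: poly_altdef exp_minus sum_distrib_right sum_divide_distrib[symmetric] divide_inverse mult.assoc)
  ultimately show ?thesis by simp
qed

lemma expF_deriv0: "(expF p has_real_derivative 0) (at 0)"
proof -
  have "((\<lambda>y. expF p y / y) \<longlongrightarrow> 0) (at 0)"
  proof (rule filterlim_split_at_real)
    have "\<forall>\<^sub>F y in at_left 0. expF p y / y = 0"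
      using eventually_at_left_real[of "-1" "0::real"] by (rule eventually_mono) (auto simp: expF_def)
    then show "((\<lambda>y. expF p y / y) \<longlongrightarrow> 0) (at_left 0)"
      by (simp add: tendsto_eventually)
  next
    have "((\<lambda>y. poly (pCons 0 p) (inverse y) * exp (- inverse y)) \<longlongrightarrow> 0) (at_right 0)"
      by (rule filterlim_compose[OF poly_exp_lim filterlim_inverse_at_top_right])
    moreover have "\<forall>\<^sub>F y in at_right 0. poly (pCons 0 p) (inverse y) * exp (- inverse y) = expF p y / y"
      using eventually_at_right_real[of "0::real" 1] by (rule eventually_mono) (auto simp: expF_def field_simps)
    ultimately show "((\<lambda>y. expF p y / y) \<longlongrightarrow> 0) (at_right 0)"
      using tendsto_cong by fastforce
  qed
  then show ?thesis by (simp add: has_field_derivative_iff expF_def)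
qed

lemma expF_deriv: "(expF p has_real_derivative expF (expQ p) x) (at x)"
proof (cases "0 < x")
  case True
  have d1: "((\<lambda>y. 1/y) has_real_derivative -1/x^2) (at x)"
    using True by (auto intro!: derivative_eq_intros simp: power2_eq_square)
  have d2: "((\<lambda>y. poly p (1/y)) has_real_derivative poly (pderiv p) (1/x) * (-1/x^2)) (at x)"
    by (rule DERIV_chain2[OF poly_DERIV d1])
  have d3: "((\<lambda>y. exp (-(1/y))) has_real_derivative exp(-(1/x)) * (1/x^2)) (at x)"
    using True by (auto intro!: derivative_eq_intros simp: power2_eq_square)
  have d: "((\<lambda>y. poly p (1/y) * exp (-(1/y))) has_real_derivative expF (expQ p) x) (at x)"
    using DERIV_mult[OF d2 d3] True
    by (simp add: expF_def expQ_def poly_diff algebra_simps power2_eq_square)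
  show ?thesis
    by (rule has_field_derivative_transform_within_open[OF d, of "{0<..}"]) (use True in \<open>auto simp: expF_def\<close>)
next
  case False
  show ?thesis
  proof (cases "x = 0")
    case True then show ?thesis using expF_deriv0 by (simp add: expF_def)
  next
    case False
    with \<open>\<not> 0 < x\<close> have "x < 0" by simp
    have d: "((\<lambda>y. 0) has_real_derivative expF (expQ p) x) (at x)"
      using \<open>x < 0\<close> by (simp add: expF_def)
    show ?thesis
      by (rule has_field_derivative_transform_within_open[OF d, of "{..<0}"]) (use \<open>x<0\<close> in \<open>auto simp: expF_def\<close>)
  qed
qed

lemma Cn_expF: "Cn n (expF p)"
proof (induction n arbitrary: p)
  case (Suc n)
  have "deriv (expF p) = expF (expQ p)" by (rule deriv_eqI) (rule expF_deriv)
  moreover have "\<forall>x. expF p differentiable at x" using expF_deriv real_differentiable_def by blast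
  ultimately show ?case using Suc by simp
qed simp

definition smoothD :: "(real \<Rightarrow> real) \<Rightarrow> bool" where
  "smoothD w \<longleftrightarrow> (\<exists>D::nat \<Rightarrow> real \<Rightarrow> real. D 0 = w \<and> (\<forall>n x. (D n has_real_derivative D (Suc n) x) (at x)))"

lemma test_funI: "smoothD w \<Longrightarrow> (\<And>x. \<bar>x\<bar> > R \<Longrightarrow> w x = 0) \<Longrightarrow> test_fun w"
  unfolding test_fun_def smoothD_def by blast

lemma test_fun_smoothD: "test_fun w \<Longrightarrow> smoothD w"
  unfolding test_fun_def smoothD_def by blast

lemma Cn_funpow: "Cn (Suc n) u \<Longrightarrow> ((deriv ^^ n) u) differentiable at x"
proof (induction n arbitrary: u)
  case 0 then show ?case by simp
next
  case (Suc n)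
  then have "Cn (Suc n) (deriv u)" by simp
  then have "((deriv ^^ n) (deriv u)) differentiable at x" by (rule Suc.IH)
  then show ?case by (simp add: funpow_Suc_right del: funpow.simps)
qed

lemma Cn_smoothD: "(\<And>n. Cn n u) \<Longrightarrow> smoothD u"
  unfolding smoothD_def
proof (rule exI[of _ "\<lambda>n. (deriv ^^ n) u"], intro conjI allI)
  fix n x assume "\<And>n. Cn n u"
  then have "((deriv ^^ n) u) differentiable at x" using Cn_funpow by blast
  then show "((deriv ^^ n) u has_real_derivative (deriv ^^ Suc n) u x) (at x)"
    using DERIV_deriv_iff_real_differentiable by simp
qed simp

lemma smoothD_deriv:
  assumes "smoothD w"
  shows "(w has_real_derivative deriv w x) (at x)" "smoothD (deriv w)"
proof -
  obtain D where D: "D 0 = w" "\<And>n x. (D n has_real_derivative D (Suc n) x) (at x)"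
    using assms unfolding smoothD_def by blast
  have "deriv w = D 1" using D by (intro deriv_eqI) auto
  then show "(w has_real_derivative deriv w x) (at x)" "smoothD (deriv w)"
    using D unfolding smoothD_def by (auto intro!: exI[of _ "\<lambda>n. D (Suc n)"])
qed

lemma smoothD_isCont: "smoothD w \<Longrightarrow> isCont w x"
  using smoothD_deriv(1) DERIV_isCont by blast

lemma smoothD_cont: "smoothD w \<Longrightarrow> continuous_on S w"
  by (simp add: continuous_at_imp_continuous_on smoothD_isCont)

lemma smoothD_prim:
  assumes "smoothD p" "\<And>x. (W has_real_derivative p x) (at x)"
  shows "smoothD W"
proof -
  obtain D where D: "D 0 = p" "\<And>n x. (D n has_real_derivative D (Suc n) x) (at x)"
    using assms unfolding smoothD_def by blast
  show ?thesis unfolding smoothD_def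
    apply (rule exI[of _ "case_nat W D"])
    using D assms(2) by (auto split: nat.split)
qed

lemma smoothD_affine:
  assumes "smoothD w"
  shows "smoothD (\<lambda>t. w (\<alpha> * t + \<beta>))"
proof -
  obtain D where D: "D 0 = w" "\<And>n x. (D n has_real_derivative D (Suc n) x) (at x)"
    using assms unfolding smoothD_def by blast
  have "((\<lambda>t. \<alpha>^n * D n (\<alpha> * t + \<beta>)) has_real_derivative \<alpha>^(Suc n) * D (Suc n) (\<alpha> * x + \<beta>)) (at x)" for n x
  proof -
    have "((\<lambda>t. D n (\<alpha> * t + \<beta>)) has_real_derivative D (Suc n) (\<alpha> * x + \<beta>) * \<alpha>) (at x)"
      by (rule DERIV_chain2[OF D(2)]) (auto intro!: derivative_eq_intros)
    from DERIV_cmult[OF this, of "\<alpha>^n"] show ?thesis by (simp add: algebra_simps)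
  qed
  then show ?thesis unfolding smoothD_def
    by (intro exI[of _ "\<lambda>n t. \<alpha>^n * D n (\<alpha> * t + \<beta>)"]) (auto simp: D(1))
qed

lemma smoothD_lin:
  assumes "smoothD w1" "smoothD w2"
  shows "smoothD (\<lambda>t. c1 * w1 t + c2 * w2 t)"
proof -
  obtain D1 where D1: "D1 0 = w1" "\<And>n x. (D1 n has_real_derivative D1 (Suc n) x) (at x)"
    using assms unfolding smoothD_def by blast
  obtain D2 where D2: "D2 0 = w2" "\<And>n x. (D2 n has_real_derivative D2 (Suc n) x) (at x)"
    using assms unfolding smoothD_def by blast
  show ?thesis unfolding smoothD_def
    by (intro exI[of _ "\<lambda>n t. c1 * D1 n t + c2 * D2 n t"])
       (auto simp: D1(1) D2(1) intro!: DERIV_add DERIV_cmult D1(2) D2(2))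
qed

definition theta0 :: "real \<Rightarrow> real" where
  "theta0 t = expF 1 t * expF 1 ((-1) * t + 1)"

lemma smoothD_theta0: "smoothD theta0"
  unfolding theta0_def by (intro Cn_smoothD Cn_mult Cn_expF Cn_affine)

lemma theta0_nonneg: "theta0 t \<ge> 0"
  by (simp add: theta0_def expF_def)

lemma theta0_zero: "t \<le> 0 \<or> t \<ge> 1 \<Longrightarrow> theta0 t = 0"
  by (auto simp: theta0_def expF_def)

lemma theta0_pos: "0 < t \<Longrightarrow> t < 1 \<Longrightarrow> theta0 t > 0"
  by (simp add: theta0_def expF_def)

lemma prim_deriv:
  assumes "continuous_on UNIV p" "\<And>t. t \<le> a \<Longrightarrow> p t = 0"
  shows "((\<lambda>t. integral {a-1..t} p) has_real_derivative p x) (at x)"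
proof (cases "x < a")
  case True
  have z: "integral {a-1..t} p = 0" if "t < a" for t
  proof -
    have "integral {a-1..t} p = integral {a-1..t} (\<lambda>_. 0)"
      by (rule integral_cong) (use that assms(2) in auto)
    then show ?thesis by simp
  qed
  have d: "((\<lambda>t. 0) has_real_derivative p x) (at x)" using True assms(2) by simp
  show ?thesis
    by (rule has_field_derivative_transform_within_open[OF d, of "{..<a}"]) (use True z in auto)
next
  case False
  have "((\<lambda>t. integral {a-1..t} p) has_real_derivative p x) (at x within {a-1..x+1})"
    apply (rule integral_has_real_derivative[OF continuous_on_subset[OF assms(1)]]) 
    using False by auto
  moreover have "at x within {a-1..x+1} = at x"
    apply (rule at_within_interior) using False by auto
  ultimately show ?thesis by simp
qed

definition kappa :: real where "kappa = integral {0..1} theta0"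

lemma kappa_pos: "kappa > 0"
proof -
  have c: "continuous_on {0..1} theta0" using smoothD_cont smoothD_theta0 by blast
  have "integral {0..1} theta0 \<ge> 0" by (rule integral_nonneg[OF integrable_continuous_interval[OF c]]) (simp add: theta0_nonneg)
  moreover have "integral {0..1} theta0 \<noteq> 0"
  proof
    assume "integral {0..1} theta0 = 0"
    then have "\<forall>x\<in>{0..1}. theta0 x = 0"
      using integral_eq_0_iff[OF c, of] theta0_nonneg by simp
    moreover have "theta0 (1/2) > 0" by (rule theta0_pos) auto
    ultimately show False by auto
  qed
  ultimately show ?thesis unfolding kappa_def by simp
qed

definition theta :: "real \<Rightarrow> real" where "theta t = theta0 t / kappa"

definition Theta :: "real \<Rightarrow> real" where "Theta t = integral {-1..t} theta"

lemma smoothD_theta: "smoothD theta"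
proof -
  have "smoothD (\<lambda>t. (1/kappa) * theta0 t + 0 * theta0 t)" by (intro smoothD_lin smoothD_theta0)
  then show ?thesis unfolding theta_def by simp
qed

lemma theta_nonneg: "theta t \<ge> 0" using theta0_nonneg kappa_pos by (simp add: theta_def)
lemma theta_zero: "t \<le> 0 \<or> t \<ge> 1 \<Longrightarrow> theta t = 0" using theta0_zero by (simp add: theta_def)
lemma theta_cont: "continuous_on S theta" using smoothD_cont smoothD_theta by blast

lemma Theta_deriv: "(Theta has_real_derivative theta x) (at x)"
  unfolding Theta_def using prim_deriv[of theta 0 x] theta_cont theta_zero by simp

lemma smoothD_Theta: "smoothD Theta"
  using smoothD_prim[OF smoothD_theta Theta_deriv] .

lemma theta_int01: "integral {0..1} theta = 1"
  using kappa_pos unfolding theta_def kappa_def by simp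

lemma theta_integrable: "theta integrable_on {a..b}"
  by (rule integrable_continuous_interval) (rule theta_cont)

lemma integral_theta_zero: "(\<And>t. t \<in> {a..b} \<Longrightarrow> theta t = 0) \<Longrightarrow> integral {a..b} theta = 0"
proof -
  assume "\<And>t. t \<in> {a..b} \<Longrightarrow> theta t = 0"
  then have "integral {a..b} theta = integral {a..b} (\<lambda>_. 0)" by (intro integral_cong) auto
  then show ?thesis by simp
qed

lemma Theta_zero: "t \<le> 0 \<Longrightarrow> Theta t = 0"
  unfolding Theta_def by (rule integral_theta_zero) (auto intro: theta_zero)

lemma Theta_one: "t \<ge> 1 \<Longrightarrow> Theta t = 1"
proof -
  assume t: "t \<ge> 1"
  have "Theta t = integral {-1..0} theta + integral {0..t} theta"
    unfolding Theta_def using t by (intro Henstock_Kurzweil_Integration.integral_combine[symmetric] theta_integrable) auto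
  also have "integral {0..t} theta = integral {0..1} theta + integral {1..t} theta"
    using t by (intro Henstock_Kurzweil_Integration.integral_combine[symmetric] theta_integrable) auto
  also have "integral {-1..0} theta = 0" by (rule integral_theta_zero) (auto intro: theta_zero)
  also have "integral {1..t} theta = 0" by (rule integral_theta_zero) (auto intro: theta_zero)
  finally show ?thesis using theta_int01 by simp
qed

lemma Theta_nonneg: "Theta t \<ge> 0"
  unfolding Theta_def by (cases "t \<ge> -1") (auto intro!: integral_nonneg theta_integrable theta_nonneg)

lemma Theta_le1: "Theta t \<le> 1"
proof (cases "t \<ge> 1")
  case True then show ?thesis using Theta_one by simp
next
  case False
  have "Theta t \<le> integral {-1..1} theta"
    unfolding Theta_def using False
    by (intro integral_subset_le theta_integrable) (auto simp: theta_nonneg)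
  also have "\<dots> = 1" using Theta_one[of 1] by (simp add: Theta_def)
  finally show ?thesis .
qed

definition loc_int :: "(real \<Rightarrow> real) \<Rightarrow> bool" where
  "loc_int v \<longleftrightarrow> v \<in> borel_measurable borel \<and> (\<forall>a b. integrable lborel (\<lambda>x. indicator {a..b} x * v x))"

lemma abs_le_1_sq: "\<bar>y::real\<bar> \<le> 1 + y^2"
proof (cases "\<bar>y\<bar> \<le> 1")
  case True then show ?thesis by (smt (verit) zero_le_power2)
next
  case False
  then have "\<bar>y\<bar> * 1 \<le> \<bar>y\<bar> * \<bar>y\<bar>" by (intro mult_left_mono) auto
  then show ?thesis by (simp add: power2_eq_square abs_mult_self_eq)
qed

lemma integrable_ind_Icc: "integrable lborel (\<lambda>x. indicator {a..b::real} x :: real)"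
  using borel_integrable_compact[of "{a..b}" "\<lambda>_. 1::real"] compact_Icc by simp

lemma L2_loc_int: "L2 v \<Longrightarrow> loc_int v"
proof -
  assume "L2 v"
  then have m[measurable]: "v \<in> borel_measurable borel" and i: "integrable lborel (\<lambda>x. (v x)^2)"
    by (auto simp: L2_def)
  have "integrable lborel (\<lambda>x. indicator {a..b} x * v x)" for a b
  proof (rule Bochner_Integration.integrable_bound)
    show "integrable lborel (\<lambda>x. indicator {a..b} x + (v x)^2 :: real)"
      by (intro Bochner_Integration.integrable_add integrable_ind_Icc i)
    show "(\<lambda>x. indicator {a..b} x * v x) \<in> borel_measurable lborel" by measurable
    show "AE x in lborel. norm (indicator {a..b} x * v x) \<le> norm (indicator {a..b} x + (v x)^2)"
      using abs_le_1_sq by (auto split: split_indicator)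
  qed
  then show ?thesis using m by (simp add: loc_int_def)
qed

lemma cont_loc_int: assumes "continuous_on UNIV v" shows "loc_int v"
  unfolding loc_int_def
  using borel_integrable_compact[OF compact_Icc continuous_on_subset[OF assms subset_UNIV]] borel_measurable_continuous_onI[OF assms]
  by simp

lemma int_loc_bdd:
  assumes "loc_int v" "b \<in> borel_measurable borel" "\<And>x. \<bar>b x\<bar> \<le> B" "\<And>x. R < \<bar>x\<bar> \<Longrightarrow> b x = 0"
  shows "integrable lborel (\<lambda>x. v x * b x)"
proof (rule Bochner_Integration.integrable_bound)
  have [measurable]: "v \<in> borel_measurable borel" "b \<in> borel_measurable borel" using assms by (auto simp: loc_int_def)
  show "integrable lborel (\<lambda>x. B * \<bar>indicator {-R..R} x * v x\<bar>)"
    using assms(1) unfolding loc_int_def by (intro integrable_mult_right integrable_abs) auto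
  show "(\<lambda>x. v x * b x) \<in> borel_measurable lborel" by measurable
  have B: "B \<ge> 0" using assms(3)[of 0] by linarith
  show "AE x in lborel. norm (v x * b x) \<le> norm (B * \<bar>indicator {- R..R} x * v x\<bar>)"
  proof (intro AE_I2)
    fix x
    show "norm (v x * b x) \<le> norm (B * \<bar>indicator {- R..R} x * v x\<bar>)"
    proof (cases "R < \<bar>x\<bar>")
      case True then show ?thesis using assms(4) by simp
    next
      case False
      then have ind: "indicator {-R..R} x = (1::real)" by (auto simp: indicator_def)
      have "norm (v x * b x) = \<bar>v x\<bar> * \<bar>b x\<bar>" by (simp add: abs_mult)
      also have "\<dots> \<le> \<bar>v x\<bar> * B" by (rule mult_left_mono) (use assms(3) in auto)
      also have "\<dots> = norm (B * \<bar>indicator {- R..R} x * v x\<bar>)" using B ind by (simp add: abs_mult)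
      finally show ?thesis .
    qed
  qed
qed

lemma cont_supp_bdd:
  fixes R :: real
  assumes "continuous_on UNIV w" "\<And>x. R < \<bar>x\<bar> \<Longrightarrow> w x = (0::real)"
  shows "\<exists>B. \<forall>x. \<bar>w x\<bar> \<le> B"
proof -
  have "compact (w ` {-R..R})" by (rule compact_continuous_image[OF continuous_on_subset[OF assms(1) subset_UNIV] compact_Icc])
  then obtain B where B: "\<forall>y\<in>w ` {-R..R}. norm y \<le> B" using compact_imp_bounded bounded_iff by metis
  have "\<bar>w x\<bar> \<le> max B 0" for x
  proof (cases "R < \<bar>x\<bar>")
    case True then show ?thesis using assms(2) by simp
  next
    case False then have "x \<in> {-R..R}" by auto
    then show ?thesis using B by (metis image_eqI max.coboundedI1 real_norm_def)
  qed
  then show ?thesis by blast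
qed

lemma test_facts:
  assumes "test_fun w"
  obtains R where "R > 0" "smoothD w" "\<And>x. R < \<bar>x\<bar> \<Longrightarrow> w x = 0" "\<And>x. R < \<bar>x\<bar> \<Longrightarrow> deriv w x = 0"
proof -
  obtain R0 where R0: "\<And>x. R0 < \<bar>x\<bar> \<Longrightarrow> w x = 0" using assms unfolding test_fun_def by blast
  define R where "R = \<bar>R0\<bar> + 1"
  have sm: "smoothD w" using assms test_fun_smoothD by blast
  have z: "\<And>x. R < \<bar>x\<bar> \<Longrightarrow> w x = 0" using R0 R_def by force
  have dz: "deriv w x = 0" if "R < \<bar>x\<bar>" for x
  proof -
    have op: "open {y::real. R < \<bar>y\<bar>}" by (intro open_Collect_less continuous_intros)
    have "((\<lambda>_. 0) has_real_derivative 0) (at x)" by simp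
    then have "(w has_real_derivative 0) (at x)"
      by (rule has_field_derivative_transform_within_open[OF _ op]) (use that z in auto)
    then show ?thesis by (rule DERIV_imp_deriv)
  qed
  show ?thesis by (rule that[of R]) (use R_def sm z dz in auto)
qed

lemma test_cont: "test_fun w \<Longrightarrow> continuous_on S w"
  using smoothD_cont test_fun_smoothD by blast

lemma test_deriv_cont: "test_fun w \<Longrightarrow> continuous_on S (deriv w)"
  using smoothD_cont smoothD_deriv(2) test_fun_smoothD by blast

lemma test_bdd: "test_fun w \<Longrightarrow> \<exists>B. \<forall>x. \<bar>w x\<bar> \<le> B"
  by (metis test_facts test_cont cont_supp_bdd)

lemma test_deriv_bdd: "test_fun w \<Longrightarrow> \<exists>B. \<forall>x. \<bar>deriv w x\<bar> \<le> B"
  by (metis test_facts test_deriv_cont cont_supp_bdd)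

lemma test_meas: "test_fun w \<Longrightarrow> w \<in> borel_measurable borel"
  using test_cont borel_measurable_continuous_onI by blast

lemma test_deriv_meas: "test_fun w \<Longrightarrow> deriv w \<in> borel_measurable borel"
  using test_deriv_cont borel_measurable_continuous_onI by blast

lemma loc_int_test_integrable:
  assumes "loc_int v" "test_fun w"
  shows "integrable lborel (\<lambda>x. v x * w x)" "integrable lborel (\<lambda>x. v x * deriv w x)"
proof -
  obtain R where R: "\<And>x. R < \<bar>x\<bar> \<Longrightarrow> w x = 0" "\<And>x. R < \<bar>x\<bar> \<Longrightarrow> deriv w x = 0"
    using test_facts[OF assms(2)] by metis
  obtain B1 where "\<forall>x. \<bar>w x\<bar> \<le> B1" using test_bdd assms(2) by blast
  then show "integrable lborel (\<lambda>x. v x * w x)"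
    using int_loc_bdd[OF assms(1) test_meas[OF assms(2)]] R by blast
  obtain B2 where "\<forall>x. \<bar>deriv w x\<bar> \<le> B2" using test_deriv_bdd assms(2) by blast
  then show "integrable lborel (\<lambda>x. v x * deriv w x)"
    using int_loc_bdd[OF assms(1) test_deriv_meas[OF assms(2)]] R by blast
qed

lemma lborel_HK:
  fixes p :: "real \<Rightarrow> real"
  assumes "continuous_on UNIV p" "\<And>x. x \<notin> {\<alpha>..\<beta>} \<Longrightarrow> p x = 0"
  shows "integrable lborel p" "integral\<^sup>L lborel p = integral {\<alpha>..\<beta>} p"
proof -
  have eq: "p = (\<lambda>x. indicator {\<alpha>..\<beta>} x *\<^sub>R p x)"
    using assms(2) by (auto simp: indicator_def fun_eq_iff)
  have si: "set_integrable lborel {\<alpha>..\<beta>} p"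
    unfolding set_integrable_def
    using borel_integrable_compact[OF compact_Icc continuous_on_subset[OF assms(1) subset_UNIV], of \<alpha> \<beta>] by simp
  have "integrable lborel p = integrable lborel (\<lambda>x. indicator {\<alpha>..\<beta>} x *\<^sub>R p x)"
    by (rule arg_cong[OF eq])
  then show "integrable lborel p" using si unfolding set_integrable_def by simp
  have "integral\<^sup>L lborel p = (LINT x:{\<alpha>..\<beta>}|lborel. p x)"
    unfolding set_lebesgue_integral_def by (rule arg_cong[OF eq])
  also have "\<dots> = integral {\<alpha>..\<beta>} p" by (rule set_borel_integral_eq_integral(2)[OF si])
  finally show "integral\<^sup>L lborel p = integral {\<alpha>..\<beta>} p" .
qed

lemma deriv_int_zero:
  assumes "\<And>x. (F has_real_derivative F' x) (at x)" "continuous_on UNIV F'"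
    "\<And>x. R < \<bar>x\<bar> \<Longrightarrow> F x = 0" "\<And>x. R < \<bar>x\<bar> \<Longrightarrow> F' x = 0"
  shows "integral\<^sup>L lborel F' = 0"
proof -
  define S where "S = \<bar>R\<bar> + 1"
  have "integral\<^sup>L lborel F' = integral {-S..S} F'"
    by (rule lborel_HK(2)[OF assms(2)]) (use assms(4) S_def in auto)
  also have "(F' has_integral (F S - F (-S))) {-S..S}"
    apply (rule fundamental_theorem_of_calculus)
    using S_def apply simp
    using assms(1) has_real_derivative_iff_has_vector_derivative has_vector_derivative_at_within by blast
  then have "integral {-S..S} F' = F S - F (-S)" by (rule integral_unique)
  also have "\<dots> = 0" using assms(3) S_def by simp
  finally show ?thesis .
qed

lemma test_H1: assumes "test_fun w" shows "H1_with_deriv w (deriv w)"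
proof -
  have lw: "loc_int w" "loc_int (deriv w)" using assms test_cont test_deriv_cont cont_loc_int by blast+
  have "L2 w" "L2 (deriv w)"
    using loc_int_test_integrable[OF lw(1) assms] loc_int_test_integrable[OF lw(2) assms] test_meas[OF assms] test_deriv_meas[OF assms]
    by (auto simp: L2_def power2_eq_square)
  moreover have "integral\<^sup>L lborel (\<lambda>x. w x * deriv z x) = - integral\<^sup>L lborel (\<lambda>x. deriv w x * z x)"
    if z: "test_fun z" for z
  proof -
    obtain R1 where R1: "\<And>x. R1 < \<bar>x\<bar> \<Longrightarrow> w x = 0" "\<And>x. R1 < \<bar>x\<bar> \<Longrightarrow> deriv w x = 0"
      using test_facts[OF assms] by metis
    have i1: "integrable lborel (\<lambda>x. w x * deriv z x)" "integrable lborel (\<lambda>x. deriv w x * z x)"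
      using loc_int_test_integrable[OF lw(1) z] loc_int_test_integrable[OF lw(2) z] by auto
    have d: "((\<lambda>x. w x * z x) has_real_derivative deriv w x * z x + w x * deriv z x) (at x)" for x
      using DERIV_mult[OF smoothD_deriv(1)[OF test_fun_smoothD[OF assms]] smoothD_deriv(1)[OF test_fun_smoothD[OF z]]]
      by (simp add: algebra_simps)
    have "integral\<^sup>L lborel (\<lambda>x. deriv w x * z x + w x * deriv z x) = 0"
    proof (rule deriv_int_zero[OF d, of R1])
      show "continuous_on UNIV (\<lambda>x. deriv w x * z x + w x * deriv z x)"
        by (intro continuous_intros test_cont[OF assms] test_deriv_cont[OF assms] test_cont[OF z] test_deriv_cont[OF z])
    qed (use R1 in auto)
    then show ?thesis using i1 by simp
  qed
  ultimately show ?thesis unfolding H1_with_deriv_def by blast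
qed

lemma ae_zero_of_intervals:
  assumes gg: "loc_int gg" and z: "\<And>x y. x < y \<Longrightarrow> integral\<^sup>L lborel (\<lambda>t. indicator {x<..y} t * gg t) = 0"
  shows "AE t in lborel. gg t = 0"
proof -
  have gmeas[measurable]: "gg \<in> borel_measurable borel" using gg loc_int_def by auto
  have main: "AE t in lborel. t \<in> {-real n<..real n} \<longrightarrow> gg t = 0" for n :: nat
  proof -
    define N where "N = real n"
    define gp where "gp t = max 0 (gg t) * indicator {-N<..N} t" for t
    define gn where "gn t = max 0 (- gg t) * indicator {-N<..N} t" for t
    have mp[measurable]: "gp \<in> borel_measurable borel" unfolding gp_def by measurable
    have mn[measurable]: "gn \<in> borel_measurable borel" unfolding gn_def by measurable
    have gi: "integrable lborel (\<lambda>t. indicator {-N..N} t * gg t)" using gg loc_int_def by auto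
    have ip: "integrable lborel gp"
    proof (rule Bochner_Integration.integrable_bound[OF gi])
      show "AE x in lborel. norm (gp x) \<le> norm (indicator {-N..N} x * gg x)"
        by (auto simp: gp_def split: split_indicator)
    qed simp
    have ineg: "integrable lborel gn"
    proof (rule Bochner_Integration.integrable_bound[OF gi])
      show "AE x in lborel. norm (gn x) \<le> norm (indicator {-N..N} x * gg x)"
        by (auto simp: gn_def split: split_indicator)
    qed simp
    have I: "integral\<^sup>L lborel (\<lambda>t. gp t * indicator {x<..} t) = integral\<^sup>L lborel (\<lambda>t. gn t * indicator {x<..} t)" for x
    proof -
      have i1: "integrable lborel (\<lambda>t. gp t * indicator {x<..} t)" "integrable lborel (\<lambda>t. gn t * indicator {x<..} t)"
        using ip ineg by (auto intro: integrable_real_mult_indicator)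
      have eq: "(\<lambda>t. gp t * indicator {x<..} t - gn t * indicator {x<..} t) = (\<lambda>t. indicator {max x (-N)<..N} t * gg t)"
        by (auto simp: gp_def gn_def fun_eq_iff split: split_indicator)
      have "integral\<^sup>L lborel (\<lambda>t. indicator {max x (-N)<..N} t * gg t) = 0"
      proof (cases "max x (-N) < N")
        case True then show ?thesis using z by blast
      next
        case False then have "(\<lambda>t. indicator {max x (-N)<..N} t * gg t) = (\<lambda>t. 0::real)"
          by (auto simp: fun_eq_iff indicator_def)
        then show ?thesis by simp
      qed
      then have "integral\<^sup>L lborel (\<lambda>t. gp t * indicator {x<..} t - gn t * indicator {x<..} t) = 0"
        using eq by simp
      then show ?thesis using i1 by simp
    qed
    have nn: "emeasure (density lborel (\<lambda>t. ennreal (h t))) {x<..} = ennreal (integral\<^sup>L lborel (\<lambda>t. h t * indicator {x<..} t))"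
      if hi: "integrable lborel h" and hp: "\<And>t. h t \<ge> 0" and hm: "h \<in> borel_measurable borel" for h :: "real \<Rightarrow> real" and x :: real
    proof -
      have [measurable]: "h \<in> borel_measurable borel" by (rule hm)
      have "emeasure (density lborel (\<lambda>t. ennreal (h t))) {x<..} = (\<integral>\<^sup>+ t. ennreal (h t) * indicator {x<..} t \<partial>lborel)"
        using hm borel_open[OF open_greaterThan[of x]] by (subst emeasure_density) auto
      also have "\<dots> = (\<integral>\<^sup>+ t. ennreal (h t * indicator {x<..} t) \<partial>lborel)"
        by (intro nn_integral_cong) (simp add: indicator_def)
      also have "\<dots> = ennreal (integral\<^sup>L lborel (\<lambda>t. h t * indicator {x<..} t))"
      proof (rule nn_integral_eq_integral)
        show "integrable lborel (\<lambda>t. h t * indicator {x<..} t)"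
          using hi by (rule integrable_real_mult_indicator[rotated]) simp
        show "AE t in lborel. 0 \<le> h t * indicator {x<..} t"
          using hp by (simp add: indicator_def)
      qed
      finally show ?thesis .
    qed
    have posp: "\<And>t. gp t \<ge> 0" and posn: "\<And>t. gn t \<ge> 0" by (auto simp: gp_def gn_def)
    have dens: "density lborel (\<lambda>t. ennreal (gp t)) = density lborel (\<lambda>t. ennreal (gn t))"
    proof (rule measure_eqI_lessThan)
      show "sets (density lborel (\<lambda>t. ennreal (gp t))) = sets borel" by simp
      show "sets (density lborel (\<lambda>t. ennreal (gn t))) = sets borel" by simp
      fix x
      show "emeasure (density lborel (\<lambda>t. ennreal (gp t))) {x<..} < \<infinity>"
        unfolding nn[OF ip posp mp] by simp
      show "emeasure (density lborel (\<lambda>t. ennreal (gp t))) {x<..} = emeasure (density lborel (\<lambda>t. ennreal (gn t))) {x<..}"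
        unfolding nn[OF ip posp mp] nn[OF ineg posn mn] I ..
    qed
    have fin: "(\<integral>\<^sup>+ t. ennreal (gp t) \<partial>lborel) \<noteq> \<infinity>"
      unfolding nn_integral_eq_integral[OF ip AE_I2[OF posp]] by simp
    have mpe: "(\<lambda>t. ennreal (gp t)) \<in> borel_measurable lborel" by measurable
    have mne: "(\<lambda>t. ennreal (gn t)) \<in> borel_measurable lborel" by measurable
    have "AE t in lborel. ennreal (gp t) = ennreal (gn t)"
      using finite_density_unique[OF mpe mne AE_I2 AE_I2 fin] dens by simp
    then show ?thesis
    proof (rule eventually_mono)
      fix t assume "ennreal (gp t) = ennreal (gn t)"
      then have e: "gp t = gn t" using posp[of t] posn[of t] by simp
      show "t \<in> {-real n<..real n} \<longrightarrow> gg t = 0"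
      proof
        assume "t \<in> {-real n<..real n}"
        then have "indicator {-N<..N} t = (1::real)" by (simp add: N_def)
        with e have "max 0 (gg t) = max 0 (- gg t)" by (simp add: gp_def gn_def)
        then show "gg t = 0" by (simp add: max_def split: if_splits)
      qed
    qed
  qed
  have "AE t in lborel. \<forall>n::nat. t \<in> {-real n<..real n} \<longrightarrow> gg t = 0"
    by (subst AE_all_countable) (use main in blast)
  then show ?thesis
  proof (rule eventually_mono)
    fix t assume a: "\<forall>n::nat. t \<in> {-real n<..real n} \<longrightarrow> gg t = 0"
    obtain n :: nat where "\<bar>t\<bar> < real n" using reals_Archimedean2 by blast
    then show "gg t = 0" using a[rule_format, of n] by (auto simp: abs_less_iff)
  qed
qed

lemma test_theta: "test_fun theta"
  by (rule test_funI[OF smoothD_theta, of 1]) (auto intro: theta_zero)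

lemma test_integrable: assumes "test_fun p" shows "integrable lborel p"
proof -
  obtain R where R: "\<And>x. R < \<bar>x\<bar> \<Longrightarrow> p x = 0" using test_facts[OF assms] by metis
  show ?thesis by (rule lborel_HK(1)[OF test_cont[OF assms], of "-R" R]) (use R in auto)
qed

lemma integral_theta_ab: "a \<le> 0 \<Longrightarrow> 1 \<le> b \<Longrightarrow> integral\<^sup>L lborel theta = integral {a..b} theta"
  by (rule lborel_HK(2)[OF theta_cont]) (auto intro!: theta_zero)

lemma integral_theta: "integral\<^sup>L lborel theta = 1"
  using integral_theta_ab[of 0 1] theta_int01 by simp

lemma test_prim:
  assumes "test_fun p"
  shows "\<exists>W. test_fun W \<and> (\<forall>x. deriv W x = p x - integral\<^sup>L lborel p * theta x)"
proof -
  obtain R where R: "R > 0" "smoothD p" "\<And>x. R < \<bar>x\<bar> \<Longrightarrow> p x = 0"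
    using test_facts[OF assms] by metis
  define c where "c = integral\<^sup>L lborel p"
  define q where "q x = p x - c * theta x" for x
  define a where "a = -R - 1"
  have qz: "q t = 0" if "t \<le> a" for t
    using that R(1) R(3)[of t] theta_zero[of t] by (auto simp: q_def a_def)
  have sq: "smoothD q"
  proof -
    have "smoothD (\<lambda>x. 1 * p x + (-c) * theta x)" by (intro smoothD_lin R(2) smoothD_theta)
    then show ?thesis unfolding q_def by simp
  qed
  have cq: "continuous_on UNIV q" using smoothD_cont[OF sq] .
  define W where "W t = integral {a-1..t} q" for t
  have dW: "(W has_real_derivative q x) (at x)" for x
    unfolding W_def by (rule prim_deriv[OF cq qz])
  have sW: "smoothD W" by (rule smoothD_prim[OF sq dW])
  have pint: "\<And>u v. p integrable_on {u..v}" using test_cont[OF assms] integrable_continuous_interval by blast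
  have tint: "\<And>u v. theta integrable_on {u..v}" by (rule theta_integrable)
  have Wz: "W t = 0" if "R + 2 < \<bar>t\<bar>" for t
  proof (cases "t < a")
    case True
    have "integral {a-1..t} q = integral {a-1..t} (\<lambda>_. 0)"
      by (rule integral_cong) (use True qz in auto)
    then show ?thesis by (simp add: W_def)
  next
    case False
    then have t: "t > R + 1" using that R(1) by (auto simp: a_def)
    have "W t = integral {a-1..t} p - integral {a-1..t} (\<lambda>x. c * theta x)"
      unfolding W_def q_def
      by (rule Henstock_Kurzweil_Integration.integral_diff[OF pint]) (intro integrable_continuous_interval continuous_intros theta_cont)
    also have "integral {a-1..t} (\<lambda>x. c * theta x) = c * integral {a-1..t} theta"
      by (rule Henstock_Kurzweil_Integration.integral_mult_right)
    also have "integral {a-1..t} p = c"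
      unfolding c_def by (rule lborel_HK(2)[OF test_cont[OF assms], symmetric]) (use R t in \<open>auto simp: a_def\<close>)
    also have "integral {a-1..t} theta = 1"
      using integral_theta_ab[of "a-1" t] t R(1) integral_theta by (simp add: a_def)
    finally show ?thesis by simp
  qed
  have "test_fun W" by (rule test_funI[OF sW, of "R+2"]) (use Wz in auto)
  moreover have "deriv W x = p x - c * theta x" for x
    using DERIV_imp_deriv[OF dW] by (simp add: q_def)
  ultimately show ?thesis unfolding c_def by blast
qed

lemma eventually_ge1: assumes "0 < d" shows "\<forall>\<^sub>F i in sequentially. 1 \<le> d * (real i + 1)"
proof -
  obtain N :: nat where N: "1/d < real N" using reals_Archimedean2 by blast
  have "1 \<le> d * (real i + 1)" if "i \<ge> N" for i
  proof -
    have "1/d < real i + 1" using N that by linarith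
    then have "1 < (real i + 1) * d" using assms by (simp add: pos_divide_less_eq)
    then show ?thesis by (simp add: mult.commute)
  qed
  then show ?thesis unfolding eventually_sequentially by blast
qed

lemma bump_conv:
  assumes "x < y"
  shows "(\<lambda>i. Theta ((t - x) * (real i + 1)) - Theta ((t - y) * (real i + 1))) \<longlonglongrightarrow> indicator {x<..y} t"
proof (cases "t \<le> x")
  case True
  have "Theta ((t - x) * (real i + 1)) - Theta ((t - y) * (real i + 1)) = 0" for i
    using True assms by (simp add: Theta_zero mult_nonpos_nonneg)
  moreover have "indicator {x<..y} t = (0::real)" using True by simp
  ultimately show ?thesis by simp
next
  case False
  show ?thesis
  proof (cases "t \<le> y")
    case True
    have ev: "\<forall>\<^sub>F i in sequentially. 1 \<le> (t - x) * (real i + 1)"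
      by (rule eventually_ge1) (use False in simp)
    have "\<forall>\<^sub>F i in sequentially. Theta ((t - x) * (real i + 1)) - Theta ((t - y) * (real i + 1)) = 1"
      using ev
    proof (rule eventually_mono)
      fix i assume "1 \<le> (t - x) * (real i + 1)"
      moreover have "(t - y) * (real i + 1) \<le> 0" using True by (simp add: mult_nonpos_nonneg)
      ultimately show "Theta ((t - x) * (real i + 1)) - Theta ((t - y) * (real i + 1)) = 1"
        by (simp add: Theta_zero Theta_one)
    qed
    moreover have "indicator {x<..y} t = (1::real)" using True False by simp
    ultimately show ?thesis by (simp add: tendsto_eventually)
  next
    case False2: False
    have ev: "\<forall>\<^sub>F i in sequentially. 1 \<le> (t - y) * (real i + 1)"
      by (rule eventually_ge1) (use False2 in simp)
    have "\<forall>\<^sub>F i in sequentially. Theta ((t - x) * (real i + 1)) - Theta ((t - y) * (real i + 1)) = 0"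
      using ev
    proof (rule eventually_mono)
      fix i assume a: "1 \<le> (t - y) * (real i + 1)"
      moreover have "(t - y) * (real i + 1) \<le> (t - x) * (real i + 1)" using assms by (intro mult_right_mono) auto
      ultimately have "1 \<le> (t - x) * (real i + 1)" by linarith
      with a show "Theta ((t - x) * (real i + 1)) - Theta ((t - y) * (real i + 1)) = 0"
        by (simp add: Theta_one)
    qed
    moreover have "indicator {x<..y} t = (0::real)" using False2 by simp
    ultimately show ?thesis by (simp add: tendsto_eventually)
  qed
qed

lemma bump_zero:
  assumes "x < y" "t \<notin> {x..y+1}"
  shows "Theta ((t - x) * (real i + 1)) - Theta ((t - y) * (real i + 1)) = 0"
proof -
  define e where "e = real i + 1"
  have e: "e \<ge> 1" by (simp add: e_def)
  have "Theta ((t - x) * e) - Theta ((t - y) * e) = 0"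
  proof (cases "t < x")
    case True
    then show ?thesis using assms e by (simp add: Theta_zero mult_nonpos_nonneg)
  next
    case False
    then have t: "t > y + 1" using assms by auto
    have "1 \<le> (t - y) * 1" using t by simp
    also have "\<dots> \<le> (t - y) * e" using t e by (intro mult_left_mono) auto
    finally have 1: "1 \<le> (t - y) * e" .
    have "(t - y) * e \<le> (t - x) * e" using assms e by (intro mult_right_mono) auto
    then show ?thesis using 1 by (simp add: Theta_one)
  qed
  then show ?thesis by (simp add: e_def)
qed

lemma bump_test:
  assumes "x < y"
  shows "test_fun (\<lambda>t. Theta ((t - x) * (real i + 1)) - Theta ((t - y) * (real i + 1)))"
proof -
  define e where "e = real i + 1"
  have "smoothD (\<lambda>t. 1 * Theta (e * t + (- x * e)) + (-1) * Theta (e * t + (- y * e)))"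
    by (intro smoothD_lin smoothD_affine smoothD_Theta)
  then have sm: "smoothD (\<lambda>t. Theta ((t - x) * e) - Theta ((t - y) * e))"
    by (simp add: algebra_simps)
  have z: "Theta ((t - x) * e) - Theta ((t - y) * e) = 0" if "\<bar>x\<bar> + \<bar>y\<bar> + 2 < \<bar>t\<bar>" for t
    unfolding e_def by (rule bump_zero[OF assms]) (use that in auto)
  show ?thesis unfolding e_def[symmetric] by (rule test_funI[OF sm]) (use z in blast)
qed

lemma Theta_diff_bound: "\<bar>Theta a - Theta b\<bar> \<le> 1"
  using Theta_nonneg[of a] Theta_nonneg[of b] Theta_le1[of a] Theta_le1[of b] by linarith

lemma loc_int_diff_const: assumes "loc_int h" shows "loc_int (\<lambda>x. h x - C)"
proof -
  have m: "h \<in> borel_measurable borel" and i: "\<And>a b. integrable lborel (\<lambda>x. indicator {a..b} x * h x)"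
    using assms loc_int_def by auto
  have "integrable lborel (\<lambda>x. indicator {a..b} x * h x - C * indicator {a..b} x)" for a b
    by (rule Bochner_Integration.integrable_diff[OF i integrable_mult_right[OF integrable_ind_Icc]])
  moreover have eq: "(\<lambda>x. indicator {a..b} x * (h x - C)) = (\<lambda>x. indicator {a..b} x * h x - C * indicator {a..b} x)" for a b
    by (rule ext) (simp add: algebra_simps)
  ultimately have "integrable lborel (\<lambda>x. indicator {a..b} x * (h x - C))" for a b
    by metis
  moreover have "(\<lambda>x. h x - C) \<in> borel_measurable borel" using m by simp
  ultimately show ?thesis unfolding loc_int_def by blast
qed

lemma dbr:
  assumes h: "loc_int h" and hz: "\<And>w. test_fun w \<Longrightarrow> integral\<^sup>L lborel (\<lambda>x. h x * deriv w x) = 0"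
  shows "\<exists>C. AE x in lborel. h x = C"
proof -
  define C where "C = integral\<^sup>L lborel (\<lambda>x. h x * theta x)"
  have hp: "integral\<^sup>L lborel (\<lambda>x. h x * p x) = integral\<^sup>L lborel p * C" if p: "test_fun p" for p
  proof -
    obtain W where W: "test_fun W" "\<And>x. deriv W x = p x - integral\<^sup>L lborel p * theta x"
      using test_prim[OF p] by blast
    have "0 = integral\<^sup>L lborel (\<lambda>x. h x * deriv W x)" using hz[OF W(1)] by simp
    also have "\<dots> = integral\<^sup>L lborel (\<lambda>x. h x * p x - integral\<^sup>L lborel p * (h x * theta x))"
      by (simp add: W(2) algebra_simps)
    also have "\<dots> = integral\<^sup>L lborel (\<lambda>x. h x * p x) - integral\<^sup>L lborel p * C"
      using loc_int_test_integrable(1)[OF h p] loc_int_test_integrable(1)[OF h test_theta] by (simp add: C_def)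
    finally show ?thesis by simp
  qed
  define gg where "gg x = h x - C" for x
  have ggl: "loc_int gg" unfolding gg_def by (rule loc_int_diff_const[OF h])
  have gz: "integral\<^sup>L lborel (\<lambda>x. gg x * p x) = 0" if p: "test_fun p" for p
  proof -
    have "integral\<^sup>L lborel (\<lambda>x. gg x * p x) = integral\<^sup>L lborel (\<lambda>x. h x * p x - C * p x)"
      by (simp add: gg_def algebra_simps)
    also have "\<dots> = integral\<^sup>L lborel (\<lambda>x. h x * p x) - C * integral\<^sup>L lborel p"
      using loc_int_test_integrable(1)[OF h p] test_integrable[OF p] by simp
    finally show ?thesis using hp[OF p] by simp
  qed
  have gm[measurable]: "gg \<in> borel_measurable borel" using ggl loc_int_def by auto
  have "integral\<^sup>L lborel (\<lambda>t. indicator {x<..y} t * gg t) = 0" if xy: "x < y" for x y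
  proof -
    define s where "s i t = gg t * (Theta ((t - x) * (real i + 1)) - Theta ((t - y) * (real i + 1)))" for i t
    have sm: "s i \<in> borel_measurable lborel" for i
    proof -
      have pm: "(\<lambda>t. Theta ((t - x) * (real i + 1)) - Theta ((t - y) * (real i + 1))) \<in> borel_measurable borel"
        by (rule test_meas[OF bump_test[OF xy]])
      show ?thesis unfolding s_def measurable_lborel2 by (rule borel_measurable_times[OF gm pm])
    qed
    have lim: "(\<lambda>i. integral\<^sup>L lborel (s i)) \<longlonglongrightarrow> integral\<^sup>L lborel (\<lambda>t. indicator {x<..y} t * gg t)"
    proof (rule integral_dominated_convergence[where w = "\<lambda>t. \<bar>indicator {x..y+1} t * gg t\<bar>"])
      show "(\<lambda>t. indicator {x<..y} t * gg t) \<in> borel_measurable lborel" by measurable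
      show "s i \<in> borel_measurable lborel" for i by (rule sm)
      show "integrable lborel (\<lambda>t. \<bar>indicator {x..y+1} t * gg t\<bar>)"
        using ggl unfolding loc_int_def by (intro integrable_abs) auto
      show "AE t in lborel. (\<lambda>i. s i t) \<longlonglongrightarrow> indicator {x<..y} t * gg t"
      proof (rule AE_I2)
        fix t
        show "(\<lambda>i. s i t) \<longlonglongrightarrow> indicator {x<..y} t * gg t"
          unfolding s_def using tendsto_mult[OF tendsto_const bump_conv[OF xy]] by (simp add: mult.commute)
      qed
      show "AE t in lborel. norm (s i t) \<le> \<bar>indicator {x..y+1} t * gg t\<bar>" for i
      proof (rule AE_I2)
        fix t
        have b: "\<bar>Theta ((t - x) * (real i + 1)) - Theta ((t - y) * (real i + 1))\<bar> \<le> 1"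
          by (rule Theta_diff_bound)
        show "norm (s i t) \<le> \<bar>indicator {x..y+1} t * gg t\<bar>"
        proof (cases "t \<in> {x..y+1}")
          case True
          have "norm (s i t) = \<bar>gg t\<bar> * \<bar>Theta ((t - x) * (real i + 1)) - Theta ((t - y) * (real i + 1))\<bar>"
            by (simp add: s_def abs_mult)
          also have "\<dots> \<le> \<bar>gg t\<bar> * 1" by (rule mult_left_mono[OF b]) simp
          also have "\<dots> = \<bar>indicator {x..y+1} t * gg t\<bar>" using True by simp
          finally show ?thesis .
        next
          case False
          then show ?thesis unfolding s_def using bump_zero[OF xy False, of i] by simp
        qed
      qed
    qed
    have "integral\<^sup>L lborel (s i) = 0" for i
      unfolding s_def by (rule gz[OF bump_test[OF xy]])
    then have "(\<lambda>i. integral\<^sup>L lborel (s i)) = (\<lambda>i. 0)" by simp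
    with lim have "(\<lambda>i. 0::real) \<longlonglongrightarrow> integral\<^sup>L lborel (\<lambda>t. indicator {x<..y} t * gg t)" by simp
    from LIMSEQ_unique[OF tendsto_const this] show ?thesis by simp
  qed
  then have "AE t in lborel. gg t = 0" by (intro ae_zero_of_intervals[OF ggl])
  then show ?thesis unfolding gg_def by (intro exI[of _ C]) auto
qed

lemma loc_int_HK:
  assumes "loc_int v"
  shows "v integrable_on {a..b}" "integral\<^sup>L lborel (\<lambda>x. indicator {a..b} x * v x) = integral {a..b} v"
proof -
  have si: "set_integrable lborel {a..b} v" using assms unfolding loc_int_def set_integrable_def by simp
  show "v integrable_on {a..b}" using set_borel_integral_eq_integral(1)[OF si] .
  show "integral\<^sup>L lborel (\<lambda>x. indicator {a..b} x * v x) = integral {a..b} v"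
    using set_borel_integral_eq_integral(2)[OF si] unfolding set_lebesgue_integral_def by simp
qed

definition PV :: "(real \<Rightarrow> real) \<Rightarrow> real \<Rightarrow> real" where
  "PV v t = integral {0..t} v - integral {t..0} v"

lemma PV_eq:
  assumes "loc_int v" "-M \<le> t" "t \<le> M"
  shows "PV v t = integral {-M..t} v - integral {-M..0} v"
proof -
  have int: "\<And>a b. v integrable_on {a..b}" using loc_int_HK(1)[OF assms(1)] .
  show ?thesis
  proof (cases "0 \<le> t")
    case True
    have c: "integral {-M..0} v + integral {0..t} v = integral {-M..t} v"
      by (rule Henstock_Kurzweil_Integration.integral_combine[OF _ True int]) (use assms True in auto)
    show ?thesis
    proof (cases "t = 0")
      case True then show ?thesis by (simp add: PV_def)
    next
      case False
      then have "{t..0} = {}" using True by auto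
      then show ?thesis using c by (simp add: PV_def)
    qed
  next
    case False
    have c: "integral {-M..t} v + integral {t..0} v = integral {-M..0} v"
      by (rule Henstock_Kurzweil_Integration.integral_combine[OF _ _ int]) (use assms False in auto)
    have "{0..t} = {}" using False by auto
    then show ?thesis using c by (simp add: PV_def)
  qed
qed

lemma PV_diff:
  assumes "loc_int v" "x \<le> y"
  shows "PV v y - PV v x = integral {x..y} v"
proof -
  define M where "M = \<bar>x\<bar> + \<bar>y\<bar>"
  have int: "\<And>a b. v integrable_on {a..b}" using loc_int_HK(1)[OF assms(1)] .
  have "PV v y - PV v x = integral {-M..y} v - integral {-M..x} v"
    using PV_eq[OF assms(1), of M y] PV_eq[OF assms(1), of M x] by (simp add: M_def)
  also have "integral {-M..x} v + integral {x..y} v = integral {-M..y} v"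
    by (rule Henstock_Kurzweil_Integration.integral_combine[OF _ assms(2) int]) (simp add: M_def)
  then have "integral {-M..y} v - integral {-M..x} v = integral {x..y} v" by simp
  finally show ?thesis .
qed

lemma PV_cont:
  assumes "loc_int v"
  shows "continuous_on UNIV (PV v)"
proof -
  have int: "\<And>a b. v integrable_on {a..b}" using loc_int_HK(1)[OF assms(1)] .
  have "isCont (PV v) t" for t
  proof -
    define M where "M = \<bar>t\<bar> + 1"
    have "continuous_on {-M..M} (\<lambda>s. integral {-M..s} v - integral {-M..0} v)"
      by (intro continuous_intros indefinite_integral_continuous_1 int)
    then have "continuous_on {-M..M} (PV v)"
      by (rule continuous_on_eq) (use PV_eq[OF assms] in auto)
    then show ?thesis by (rule continuous_on_interior) (simp add: M_def abs_less_iff; linarith)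
  qed
  then show ?thesis by (simp add: continuous_at_imp_continuous_on)
qed

lemma loc_int_diff:
  assumes "loc_int a" "loc_int b"
  shows "loc_int (\<lambda>x. a x - b x)"
proof -
  have m: "a \<in> borel_measurable borel" "b \<in> borel_measurable borel" using assms loc_int_def by auto
  have i: "\<And>l u. integrable lborel (\<lambda>x. indicator {l..u} x * a x)" "\<And>l u. integrable lborel (\<lambda>x. indicator {l..u} x * b x)"
    using assms loc_int_def by auto
  have eq: "(\<lambda>x. indicator {l..u} x * (a x - b x)) = (\<lambda>x. indicator {l..u} x * a x - indicator {l..u} x * b x)" for l u
    by (rule ext) (simp add: algebra_simps)
  have "integrable lborel (\<lambda>x. indicator {l..u} x * (a x - b x))" for l u
    unfolding eq by (rule Bochner_Integration.integrable_diff[OF i(1) i(2)])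
  moreover have "(\<lambda>x. a x - b x) \<in> borel_measurable borel" using m by simp
  ultimately show ?thesis unfolding loc_int_def by blast
qed

lemma test_deriv_test: assumes "test_fun w" shows "test_fun (deriv w)"
proof -
  obtain R where R: "\<And>x. R < \<bar>x\<bar> \<Longrightarrow> deriv w x = 0" "smoothD w" using test_facts[OF assms] by metis
  show ?thesis by (rule test_funI[OF smoothD_deriv(2)[OF R(2)], of R]) (use R in auto)
qed

lemma ibp_PV:
  assumes v: "loc_int v" and w: "test_fun w"
  shows "integral\<^sup>L lborel (\<lambda>t. PV v t * deriv w t) = - integral\<^sup>L lborel (\<lambda>s. v s * w s)"
proof -
  obtain R0 where R0: "R0 > 0" "smoothD w" "\<And>x. R0 < \<bar>x\<bar> \<Longrightarrow> w x = 0" "\<And>x. R0 < \<bar>x\<bar> \<Longrightarrow> deriv w x = 0"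
    using test_facts[OF w] by metis
  define R where "R = R0 + 1"
  have Rpos: "R > 0" using R0 by (simp add: R_def)
  have wR: "w R = 0" using R0 by (simp add: R_def)
  have wz: "w x = 0" "deriv w x = 0" if "R < \<bar>x\<bar>" for x using R0 that by (auto simp: R_def)
  obtain B where B: "\<And>t. \<bar>deriv w t\<bar> \<le> B" using test_deriv_bdd[OF w] by blast
  have B0: "B \<ge> 0" using B[of 0] by linarith
  have vm[measurable]: "v \<in> borel_measurable borel" using v loc_int_def by auto
  have dm[measurable]: "deriv w \<in> borel_measurable borel" using test_deriv_meas[OF w] .
  define K where "K s t = (if -R \<le> s \<and> s \<le> t \<and> t \<le> R then 1 else 0 :: real)" for s t
  define F where "F s t = v s * deriv w t * K s t" for s t
  have Fm: "(\<lambda>(s,t). F s t) \<in> borel_measurable (lborel \<Otimes>\<^sub>M lborel)"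
    unfolding F_def K_def by measurable
  define G where "G p = \<bar>indicator {-R..R} (fst p) * v (fst p)\<bar> * (B * indicator {-R..R} (snd p))" for p :: "real \<times> real"
  have Gm: "G \<in> borel_measurable (lborel \<Otimes>\<^sub>M lborel)" unfolding G_def by measurable
  define K0 where "K0 = integral\<^sup>L lborel (\<lambda>t. indicator {-R..R} t :: real)"
  have Gint: "integrable (lborel \<Otimes>\<^sub>M lborel) G"
  proof (rule lborel_pair.Fubini_integrable[OF Gm])
    have eq: "(\<lambda>s. LBINT t. norm (G (s, t))) = (\<lambda>s. \<bar>indicator {-R..R} s * v s\<bar> * (B * K0))"
    proof (rule ext)
      fix s
      have "(LBINT t. norm (G (s, t))) = (LBINT t. \<bar>indicator {-R..R} s * v s\<bar> * (B * indicator {-R..R} t))"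
        using B0 by (intro Bochner_Integration.integral_cong) (auto simp: G_def abs_mult)
      also have "\<dots> = \<bar>indicator {-R..R} s * v s\<bar> * (B * K0)" by (simp only: integral_mult_right_zero K0_def)
      finally show "(LBINT t. norm (G (s, t))) = \<bar>indicator {-R..R} s * v s\<bar> * (B * K0)" .
    qed
    show "integrable lborel (\<lambda>s. LBINT t. norm (G (s, t)))"
      unfolding eq using v unfolding loc_int_def by (intro integrable_mult_left integrable_abs) auto
    show "AE s in lborel. integrable lborel (\<lambda>t. G (s, t))"
    proof -
      have ii: "integrable lborel (\<lambda>t. indicator {-R..R} t :: real)" by (rule integrable_ind_Icc)
      show ?thesis unfolding G_def by (intro AE_I2 integrable_mult_right) (simp add: ii)
    qed
  qed
  have Fint: "integrable (lborel \<Otimes>\<^sub>M lborel) (\<lambda>(s,t). F s t)"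
  proof (rule Bochner_Integration.integrable_bound[OF Gint Fm])
    show "AE p in lborel \<Otimes>\<^sub>M lborel. norm ((\<lambda>(s,t). F s t) p) \<le> norm (G p)"
    proof (rule AE_I2)
      fix p :: "real \<times> real"
      obtain s t where p: "p = (s,t)" by (cases p)
      show "norm ((\<lambda>(s,t). F s t) p) \<le> norm (G p)"
      proof (cases "-R \<le> s \<and> s \<le> t \<and> t \<le> R")
        case True
        have "norm ((\<lambda>(s,t). F s t) p) = \<bar>v s\<bar> * \<bar>deriv w t\<bar>" using True by (simp add: p F_def K_def abs_mult)
        also have "\<dots> \<le> \<bar>v s\<bar> * B" by (rule mult_left_mono[OF B]) simp
        also have "\<dots> = norm (G p)" using True B0 by (simp add: p G_def abs_mult)
        finally show ?thesis .
      next
        case False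
        then have "K s t = 0" by (simp add: K_def)
        then show ?thesis by (simp add: p F_def)
      qed
    qed
  qed
  have fub: "(LBINT t. LBINT s. F s t) = (LBINT s. LBINT t. F s t)"
    by (rule lborel_pair.Fubini_integral[OF Fint])
  have in_s: "(LBINT s. F s t) = (PV v t - PV v (-R)) * deriv w t" for t
  proof (cases "-R \<le> t \<and> t \<le> R")
    case True
    have "(\<lambda>s. F s t) = (\<lambda>s. deriv w t * (indicator {-R..t} s * v s))"
      by (rule ext) (use True in \<open>auto simp: F_def K_def indicator_def\<close>)
    then have "(LBINT s. F s t) = deriv w t * (LBINT s. indicator {-R..t} s * v s)" by simp
    also have "(LBINT s. indicator {-R..t} s * v s) = integral {-R..t} v" by (rule loc_int_HK(2)[OF v])
    also have "\<dots> = PV v t - PV v (-R)" using PV_diff[OF v, of "-R" t] True by simp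
    finally show ?thesis by simp
  next
    case False
    then have "deriv w t = 0" using wz(2)[of t] by auto
    moreover have "(\<lambda>s. F s t) = (\<lambda>s. 0)" using False by (auto simp: F_def K_def)
    ultimately show ?thesis by simp
  qed
  have lw': "loc_int (deriv w)" using cont_loc_int test_deriv_cont[OF w] by blast
  have in_t: "(LBINT t. F s t) = - (v s * w s)" for s
  proof (cases "-R \<le> s \<and> s \<le> R")
    case True
    have "(\<lambda>t. F s t) = (\<lambda>t. v s * (indicator {s..R} t * deriv w t))"
      by (rule ext) (use True in \<open>auto simp: F_def K_def indicator_def\<close>)
    then have "(LBINT t. F s t) = v s * (LBINT t. indicator {s..R} t * deriv w t)" by simp
    also have "(LBINT t. indicator {s..R} t * deriv w t) = integral {s..R} (deriv w)" by (rule loc_int_HK(2)[OF lw'])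
    also have "\<dots> = w R - w s"
    proof (rule integral_unique, rule fundamental_theorem_of_calculus)
      show "s \<le> R" using True by simp
      fix x
      show "(w has_vector_derivative deriv w x) (at x within {s..R})"
        using smoothD_deriv(1)[OF R0(2)] has_real_derivative_iff_has_vector_derivative has_vector_derivative_at_within by blast
    qed
    finally show ?thesis using wR by simp
  next
    case False
    then have "w s = 0" using wz(1)[of s] by auto
    moreover have "(\<lambda>t. F s t) = (\<lambda>t. 0)" using False by (auto simp: F_def K_def)
    ultimately show ?thesis by simp
  qed
  have lPV: "loc_int (PV v)" by (rule cont_loc_int[OF PV_cont[OF v]])
  have i1: "integrable lborel (\<lambda>t. PV v t * deriv w t)" by (rule loc_int_test_integrable(2)[OF lPV w])
  have i2: "integrable lborel (deriv w)" by (rule test_integrable[OF test_deriv_test[OF w]])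
  have z: "integral\<^sup>L lborel (deriv w) = 0"
  proof (rule deriv_int_zero[of w "deriv w" R])
    show "(w has_real_derivative deriv w x) (at x)" for x by (rule smoothD_deriv(1)[OF R0(2)])
    show "continuous_on UNIV (deriv w)" by (rule test_deriv_cont[OF w])
  qed (use wz in auto)
  have "integral\<^sup>L lborel (\<lambda>t. PV v t * deriv w t) = integral\<^sup>L lborel (\<lambda>t. PV v t * deriv w t - PV v (-R) * deriv w t)"
    using i1 i2 z by simp
  also have "\<dots> = (LBINT t. LBINT s. F s t)"
    using in_s by (simp add: left_diff_distrib)
  also have "\<dots> = (LBINT s. LBINT t. F s t)" by (rule fub)
  also have "\<dots> = (LBINT s. - (v s * w s))" using in_t by simp
  also have "\<dots> = - integral\<^sup>L lborel (\<lambda>s. v s * w s)" by simp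
  finally show ?thesis .
qed

lemma rep:
  assumes u: "loc_int u" and v: "loc_int v"
    and wk: "\<And>w. test_fun w \<Longrightarrow> integral\<^sup>L lborel (\<lambda>x. u x * deriv w x) = - integral\<^sup>L lborel (\<lambda>x. v x * w x)"
  shows "\<exists>U. continuous_on UNIV U \<and> (AE x in lborel. u x = U x) \<and> (\<forall>x y. x \<le> y \<longrightarrow> U y - U x = integral {x..y} v)"
proof -
  have lPV: "loc_int (PV v)" by (rule cont_loc_int[OF PV_cont[OF v]])
  define h where "h x = u x - PV v x" for x
  have lh: "loc_int h" unfolding h_def by (rule loc_int_diff[OF u lPV])
  have "integral\<^sup>L lborel (\<lambda>x. h x * deriv w x) = 0" if w: "test_fun w" for w
  proof -
    have "integral\<^sup>L lborel (\<lambda>x. h x * deriv w x) = integral\<^sup>L lborel (\<lambda>x. u x * deriv w x - PV v x * deriv w x)"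
      by (simp add: h_def left_diff_distrib)
    also have "\<dots> = integral\<^sup>L lborel (\<lambda>x. u x * deriv w x) - integral\<^sup>L lborel (\<lambda>x. PV v x * deriv w x)"
      using loc_int_test_integrable(2)[OF u w] loc_int_test_integrable(2)[OF lPV w] by simp
    also have "\<dots> = 0" using wk[OF w] ibp_PV[OF v w] by simp
    finally show ?thesis .
  qed
  then obtain C where C: "AE x in lborel. h x = C" using dbr[OF lh] by blast
  define U where "U x = PV v x + C" for x
  have "continuous_on UNIV U" unfolding U_def by (intro continuous_intros PV_cont[OF v])
  moreover have "AE x in lborel. u x = U x" using C by eventually_elim (simp add: h_def U_def)
  moreover have "\<forall>x y. x \<le> y \<longrightarrow> U y - U x = integral {x..y} v"
    using PV_diff[OF v] by (simp add: U_def)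
  ultimately show ?thesis by blast
qed

definition fe :: "nat \<Rightarrow> real \<Rightarrow> real \<Rightarrow> real \<Rightarrow> real \<Rightarrow> real \<Rightarrow> real \<Rightarrow> real" where
  "fe k a b c d u v = a * u^(2*k+1) + b * u^k * v^(k+1) + c * (real k + 2) / real k * u^(k+1) * v^k + d * u^(k-1) * v^(k+2)"

definition ge :: "nat \<Rightarrow> real \<Rightarrow> real \<Rightarrow> real \<Rightarrow> real \<Rightarrow> real \<Rightarrow> real \<Rightarrow> real" where
  "ge k a b c d u v = a * v^(2*k+1) + b * u^(k+1) * v^k + c * u^(k+2) * v^(k-1) + d * (real k + 2) / real k * u^k * v^(k+1)"

lemma abcd_repr:
  fixes a b c d :: real
  obtains A B C D where "a = A * (2 * real (Suc m) + 2)" "b = B * (real (Suc m) + 1)" "c = C * real (Suc m)" "d = D * real (Suc m)"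
proof -
  have K: "real (Suc m) \<noteq> 0" "2 * real (Suc m) + 2 \<noteq> 0" "real (Suc m) + 1 \<noteq> 0" by auto
  show ?thesis
    by (rule that[of "a / (2 * real (Suc m) + 2)" "b / (real (Suc m) + 1)" "c / real (Suc m)" "d / real (Suc m)"])
       (use K in simp_all)
qed

lemma H_chain:
  assumes "k \<ge> 1" "(U has_real_derivative U') (at x)" "(W has_real_derivative W') (at x)"
  shows "((\<lambda>x. H k a b c d (U x) (W x)) has_real_derivative
           fe k a b c d (U x) (W x) * U' + ge k a b c d (U x) (W x) * W') (at x)"
proof -
  obtain m where k: "k = Suc m" using assms(1) by (cases k) auto
  obtain A B C D where abcd: "a = A * (2 * real (Suc m) + 2)" "b = B * (real (Suc m) + 1)" "c = C * real (Suc m)" "d = D * real (Suc m)"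
    by (rule abcd_repr)
  have K: "real (Suc m) \<noteq> 0" "2 * real (Suc m) + 2 \<noteq> 0" "real (Suc m) + 1 \<noteq> 0" by auto
  have q: "c * (real (Suc m) + 2) / real (Suc m) = C * (real (Suc m) + 2)" "d * (real (Suc m) + 2) / real (Suc m) = D * (real (Suc m) + 2)"
    "c / real (Suc m) = C" "d / real (Suc m) = D"
    "a / (2 * real (Suc m) + 2) = A" "b / (real (Suc m) + 1) = B" using K by (simp_all add: abcd)
  have eqH: "(\<lambda>x. H k a b c d (U x) (W x)) = (\<lambda>x. A * (U x ^ (2*Suc m+2) + W x ^ (2*Suc m+2)) + B * (U x * W x)^(Suc m+1) + C * U x^(Suc m+2) * W x^Suc m + D * U x^Suc m * W x^(Suc m+2))"
    unfolding H_def k unfolding q ..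
  have fq: "fe k a b c d u v = A * (2 * real (Suc m) + 2) * u^(2*Suc m+1) + B * (real (Suc m) + 1) * u^Suc m * v^(Suc m+1) + C * (real (Suc m) + 2) * u^(Suc m+1) * v^Suc m + D * real (Suc m) * u^(Suc m-1) * v^(Suc m+2)" for u v
    unfolding fe_def k unfolding q unfolding abcd ..
  have gq: "ge k a b c d u v = A * (2 * real (Suc m) + 2) * v^(2*Suc m+1) + B * (real (Suc m) + 1) * u^(Suc m+1) * v^Suc m + C * real (Suc m) * u^(Suc m+2) * v^(Suc m-1) + D * (real (Suc m) + 2) * u^Suc m * v^(Suc m+1)" for u v
    unfolding ge_def k unfolding q unfolding abcd ..
  have d: "((\<lambda>x. A * (U x ^ (2*Suc m+2) + W x ^ (2*Suc m+2)) + B * (U x * W x)^(Suc m+1) + C * U x^(Suc m+2) * W x^Suc m + D * U x^Suc m * W x^(Suc m+2))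
     has_real_derivative
     (A * (2 * real (Suc m) + 2) * U x^(2*Suc m+1) + B * (real (Suc m) + 1) * U x^Suc m * W x^(Suc m+1) + C * (real (Suc m) + 2) * U x^(Suc m+1) * W x^Suc m + D * real (Suc m) * U x^(Suc m-1) * W x^(Suc m+2)) * U'
   + (A * (2 * real (Suc m) + 2) * W x^(2*Suc m+1) + B * (real (Suc m) + 1) * U x^(Suc m+1) * W x^Suc m + C * real (Suc m) * U x^(Suc m+2) * W x^(Suc m-1) + D * (real (Suc m) + 2) * U x^Suc m * W x^(Suc m+1)) * W') (at x)"
    apply (rule derivative_eq_intros assms(2,3) refl)+
    apply (simp only: power_add power_mult_distrib power_Suc mult_2 diff_Suc_1 power_0 power_one_right)
    by (simp add: algebra_simps power2_eq_square power_add)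
  show ?thesis unfolding eqH fq gq by (rule d)
qed

lemma f_eq: assumes "k \<ge> 1" shows "f k a b c d u v = fe k a b c d u v"
proof -
  have "((\<lambda>s. H k a b c d s v) has_real_derivative fe k a b c d u v * 1 + ge k a b c d u v * 0) (at u)"
    using H_chain[OF assms, of "\<lambda>s. s" 1 u "\<lambda>_. v" 0] by simp
  then show ?thesis unfolding f_def by (simp add: DERIV_imp_deriv)
qed

lemma g_eq: assumes "k \<ge> 1" shows "g k a b c d u v = ge k a b c d u v"
proof -
  have "((\<lambda>t. H k a b c d u t) has_real_derivative fe k a b c d u v * 0 + ge k a b c d u v * 1) (at v)"
    using H_chain[OF assms, of "\<lambda>_. u" 0 v "\<lambda>s. s" 1] by simp
  then show ?thesis unfolding g_def by (simp add: DERIV_imp_deriv)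
qed

lemma euler:
  assumes "k \<ge> 1"
  shows "u * fe k a b c d u v + v * ge k a b c d u v = (2 * real k + 2) * H k a b c d u v"
proof -
  obtain m where k: "k = Suc m" using assms(1) by (cases k) auto
  obtain A B C D where abcd: "a = A * (2 * real (Suc m) + 2)" "b = B * (real (Suc m) + 1)" "c = C * real (Suc m)" "d = D * real (Suc m)"
    by (rule abcd_repr)
  have K: "real (Suc m) \<noteq> 0" "2 * real (Suc m) + 2 \<noteq> 0" "real (Suc m) + 1 \<noteq> 0" by auto
  have q: "c * (real (Suc m) + 2) / real (Suc m) = C * (real (Suc m) + 2)" "d * (real (Suc m) + 2) / real (Suc m) = D * (real (Suc m) + 2)"
    "c / real (Suc m) = C" "d / real (Suc m) = D"
    "a / (2 * real (Suc m) + 2) = A" "b / (real (Suc m) + 1) = B" using K by (simp_all add: abcd)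
  show ?thesis
    unfolding fe_def ge_def H_def k unfolding q unfolding abcd
    apply (simp only: power_add power_mult_distrib power_Suc mult_2 diff_Suc_1 power_0 power_one_right)
    by (simp add: algebra_simps power2_eq_square)
qed

lemma mono_bound:
  fixes p q Mb :: real
  assumes "\<bar>p\<bar> \<le> Mb" "\<bar>q\<bar> \<le> Mb" "i + j \<ge> 2"
  shows "\<bar>p^i * q^j\<bar> \<le> Mb^(i+j-2) * (p^2 + q^2)"
proof -
  define mx where "mx = max \<bar>p\<bar> \<bar>q\<bar>"
  have mx0: "0 \<le> mx" by (simp add: mx_def)
  have "\<bar>p^i * q^j\<bar> = \<bar>p\<bar>^i * \<bar>q\<bar>^j" by (simp add: abs_mult power_abs)
  also have "\<dots> \<le> mx^i * mx^j"
  proof (rule mult_mono)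
    show "\<bar>p\<bar>^i \<le> mx^i" by (rule power_mono) (simp_all add: mx_def)
    show "\<bar>q\<bar>^j \<le> mx^j" by (rule power_mono) (simp_all add: mx_def)
    show "0 \<le> mx^i" using mx0 by simp
    show "0 \<le> \<bar>q\<bar>^j" by simp
  qed
  also have "\<dots> = mx^(i+j-2) * mx^2"
  proof -
    have e: "i + j = (i+j-2) + 2" using assms(3) by simp
    have "mx^i * mx^j = mx^(i+j)" by (simp add: power_add)
    also have "\<dots> = mx^((i+j-2)+2)" using arg_cong[of _ _ "\<lambda>n. mx^n", OF e] .
    also have "\<dots> = mx^(i+j-2) * mx^2" by (rule power_add)
    finally show ?thesis .
  qed
  also have "\<dots> \<le> Mb^(i+j-2) * (p^2 + q^2)"
  proof (rule mult_mono)
    show "mx^(i+j-2) \<le> Mb^(i+j-2)" by (rule power_mono) (use assms mx0 in \<open>simp add: mx_def\<close>)+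
    show "mx^2 \<le> p^2 + q^2"
    proof (cases "\<bar>p\<bar> \<le> \<bar>q\<bar>")
      case True then have "mx = \<bar>q\<bar>" by (simp add: mx_def max_def)
      then show ?thesis by simp
    next
      case False then have "mx = \<bar>p\<bar>" by (simp add: mx_def max_def)
      then show ?thesis by simp
    qed
    show "0 \<le> Mb^(i+j-2)" using assms(1) by simp
    show "0 \<le> mx^2" by simp
  qed
  finally show ?thesis .
qed

lemma mono_integrable:
  fixes U W :: "real \<Rightarrow> real"
  assumes [measurable]: "U \<in> borel_measurable borel" "W \<in> borel_measurable borel"
    and "\<And>x. \<bar>U x\<bar> \<le> Mb" "\<And>x. \<bar>W x\<bar> \<le> Mb"
    and iU: "integrable lborel (\<lambda>x. (U x)^2)" and iW: "integrable lborel (\<lambda>x. (W x)^2)" and "i + j \<ge> 2"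
  shows "integrable lborel (\<lambda>x. U x ^ i * W x ^ j)"
proof (rule Bochner_Integration.integrable_bound)
  show "integrable lborel (\<lambda>x. Mb^(i+j-2) * ((U x)^2 + (W x)^2))"
    by (intro integrable_mult_right Bochner_Integration.integrable_add iU iW)
  show "(\<lambda>x. U x ^ i * W x ^ j) \<in> borel_measurable lborel" by measurable
  show "AE x in lborel. norm (U x ^ i * W x ^ j) \<le> norm (Mb^(i+j-2) * ((U x)^2 + (W x)^2))"
  proof (rule AE_I2)
    fix x
    have "norm (U x ^ i * W x ^ j) \<le> Mb^(i+j-2) * ((U x)^2 + (W x)^2)"
      using mono_bound[of "U x" Mb "W x" i j] assms by simp
    also have "\<dots> \<le> norm (Mb^(i+j-2) * ((U x)^2 + (W x)^2))" by simp
    finally show "norm (U x ^ i * W x ^ j) \<le> norm (Mb^(i+j-2) * ((U x)^2 + (W x)^2))" .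
  qed
qed

lemma deriv_of_integral:
  assumes q: "continuous_on UNIV q" and F: "\<And>x y. x \<le> y \<Longrightarrow> F y - F x = integral {x..y} q"
  shows "(F has_real_derivative q t) (at t)"
proof -
  define G where "G s = F (t - 1) + integral {t-1..s} q" for s
  have "(G has_real_derivative q t) (at t within {t-1..t+1})"
    unfolding G_def
    by (rule derivative_eq_intros integral_has_real_derivative[OF continuous_on_subset[OF q subset_UNIV]] | simp)+
  moreover have "at t within {t-1..t+1} = at t" by (rule at_within_interior) simp
  ultimately have dG: "(G has_real_derivative q t) (at t)" by simp
  show ?thesis
  proof (rule has_field_derivative_transform_within_open[OF dG, of "{t-1<..}"])
    fix s assume "s \<in> {t-1<..}"
    then show "G s = F s" using F[of "t-1" s] by (simp add: G_def)
  qed auto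
qed

lemma HK_cong_AE:
  assumes "loc_int u" "loc_int v" "AE x in lborel. u x = v x"
  shows "integral {x..y} u = integral {x..y} v"
proof -
  have [measurable]: "u \<in> borel_measurable borel" "v \<in> borel_measurable borel" using assms loc_int_def by auto
  have "integral {x..y} u = integral\<^sup>L lborel (\<lambda>t. indicator {x..y} t * u t)" using loc_int_HK(2)[OF assms(1)] by simp
  also have "\<dots> = integral\<^sup>L lborel (\<lambda>t. indicator {x..y} t * v t)"
    by (rule integral_cong_AE) (use assms(3) in auto)
  also have "\<dots> = integral {x..y} v" using loc_int_HK(2)[OF assms(2)] by simp
  finally show ?thesis .
qed

lemma const_int_zero: assumes "integrable lborel (\<lambda>x::real. c)" shows "c = (0::real)"
proof (rule ccontr)
  assume c: "c \<noteq> 0"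
  have "integrable lborel (\<lambda>x::real. (1/c) * c)" using assms by (rule integrable_mult_right)
  then have i1: "integrable lborel (\<lambda>x::real. 1::real)" using c by simp
  have ni: "\<not> integrable lborel (\<lambda>x::real. 1::real)"
    using integrable_indicator_iff[of lborel "UNIV :: real set"] by (simp add: emeasure_lborel_UNIV)
  show False using i1 ni by blast
qed

lemma sq_bound:
  fixes U V :: "real \<Rightarrow> real"
  assumes dU: "\<And>x. (U has_real_derivative V x) (at x)" and cV: "continuous_on UNIV V"
    and iU: "integrable lborel (\<lambda>x. (U x)^2)" and iV: "integrable lborel (\<lambda>x. (V x)^2)"
  shows "\<exists>Mb. \<forall>x. \<bar>U x\<bar> \<le> Mb"
proof -
  have cU: "continuous_on UNIV U" by (rule continuous_at_imp_continuous_on) (use DERIV_isCont[OF dU] in blast)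
  have [measurable]: "U \<in> borel_measurable borel" "V \<in> borel_measurable borel"
    using cU cV borel_measurable_continuous_onI by blast+
  define S where "S x = (U x)^2 + (V x)^2" for x
  have cS: "continuous_on UNIV S" unfolding S_def by (intro continuous_intros cU cV)
  have iS: "integrable lborel S" unfolding S_def by (intro Bochner_Integration.integrable_add iU iV)
  define M1 where "M1 = integral\<^sup>L lborel S"
  have "\<exists>y0. (U y0)^2 \<le> 1"
  proof (rule ccontr)
    assume "\<not> ?thesis"
    then have big: "\<And>y. (U y)^2 > 1" by (simp add: not_le)
    have "integrable lborel (\<lambda>x::real. 1::real)"
    proof (rule Bochner_Integration.integrable_bound[OF iU])
      show "AE x in lborel. norm (1::real) \<le> norm ((U x)^2)" using big by (auto intro!: AE_I2 less_imp_le)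
    qed simp
    then show False using const_int_zero[of 1] by simp
  qed
  then obtain y0 where y0: "(U y0)^2 \<le> 1" by blast
  have bnd: "\<bar>(U q)^2 - (U p)^2\<bar> \<le> M1" if "p \<le> q" for p q
  proof -
    have dU2: "((\<lambda>x. (U x)^2) has_real_derivative 2 * U x * V x) (at x)" for x
      using DERIV_mult[OF dU dU, of x] by (simp add: power2_eq_square algebra_simps)
    have "((\<lambda>x. 2 * U x * V x) has_integral (U q)^2 - (U p)^2) {p..q}"
    proof (rule fundamental_theorem_of_calculus[OF that])
      fix x show "((\<lambda>x. (U x)^2) has_vector_derivative 2 * U x * V x) (at x within {p..q})"
        using dU2 has_real_derivative_iff_has_vector_derivative has_vector_derivative_at_within by blast
    qed
    then have e: "integral {p..q} (\<lambda>x. 2 * U x * V x) = (U q)^2 - (U p)^2" by (rule integral_unique)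
    have "norm (integral {p..q} (\<lambda>x. 2 * U x * V x)) \<le> integral {p..q} S"
    proof (rule integral_norm_bound_integral)
      show "(\<lambda>x. 2 * U x * V x) integrable_on {p..q}"
        by (rule integrable_continuous_interval) (intro continuous_intros continuous_on_subset[OF cU subset_UNIV] continuous_on_subset[OF cV subset_UNIV])
      show "S integrable_on {p..q}" by (rule integrable_continuous_interval[OF continuous_on_subset[OF cS subset_UNIV]])
      fix x
      have "0 \<le> (\<bar>U x\<bar> - \<bar>V x\<bar>)^2" by simp
      moreover have "(\<bar>U x\<bar> - \<bar>V x\<bar>)^2 = (U x)^2 + (V x)^2 - 2 * \<bar>U x\<bar> * \<bar>V x\<bar>" by (simp add: power2_diff)
      moreover have "norm (2 * U x * V x) = 2 * \<bar>U x\<bar> * \<bar>V x\<bar>" by (simp add: abs_mult)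
      ultimately show "norm (2 * U x * V x) \<le> S x" by (simp add: S_def)
    qed
    also have "integral {p..q} S = integral\<^sup>L lborel (\<lambda>t. indicator {p..q} t * S t)"
      using loc_int_HK(2)[OF cont_loc_int[OF cS]] by simp
    also have "\<dots> \<le> M1" unfolding M1_def
    proof (rule integral_mono)
      have "integrable lborel (\<lambda>t. S t * indicator {p..q} t)" by (rule integrable_real_mult_indicator) (simp_all add: iS)
      then show "integrable lborel (\<lambda>t. indicator {p..q} t * S t)" by (simp add: mult.commute)
      show "integrable lborel S" by (rule iS)
      fix t show "indicator {p..q} t * S t \<le> S t" by (simp add: S_def indicator_def)
    qed
    finally show ?thesis using e by simp
  qed
  have "\<bar>U x\<bar> \<le> 3 + M1" for x
  proof -
    have "(U x)^2 \<le> 1 + M1"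
    proof (cases "y0 \<le> x")
      case True then show ?thesis using bnd[OF True] y0 by linarith
    next
      case False then show ?thesis using bnd[of x y0] y0 by linarith
    qed
    then show ?thesis using abs_le_1_sq[of "U x"] by linarith
  qed
  then show ?thesis by blast
qed

lemma H1_facts:
  assumes "H1_with_deriv u u'"
  shows "loc_int u" "loc_int u'" "u \<in> borel_measurable borel" "u' \<in> borel_measurable borel"
    "integrable lborel (\<lambda>x. (u x)^2)" "integrable lborel (\<lambda>x. (u' x)^2)"
    "\<And>w. test_fun w \<Longrightarrow> integral\<^sup>L lborel (\<lambda>x. u x * deriv w x) = - integral\<^sup>L lborel (\<lambda>x. u' x * w x)"
proof -
  have L: "L2 u" "L2 u'" using assms unfolding H1_with_deriv_def by auto
  show "loc_int u" "loc_int u'" using L L2_loc_int by auto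
  show "u \<in> borel_measurable borel" "u' \<in> borel_measurable borel"
    "integrable lborel (\<lambda>x. (u x)^2)" "integrable lborel (\<lambda>x. (u' x)^2)" using L unfolding L2_def by auto
  show "\<And>w. test_fun w \<Longrightarrow> integral\<^sup>L lborel (\<lambda>x. u x * deriv w x) = - integral\<^sup>L lborel (\<lambda>x. u' x * w x)"
    using assms unfolding H1_with_deriv_def by auto
qed

lemma sq_deriv: assumes "(U has_real_derivative U') (at x)" shows "((\<lambda>x. (U x)^2) has_real_derivative 2 * U x * U') (at x)"
  using DERIV_mult[OF assms assms] by (simp add: power2_eq_square algebra_simps)

theorem proposition3p4:
  fixes k :: nat and a b c d :: real and \<phi> \<phi>' \<psi> \<psi>' :: "real \<Rightarrow> real"
  assumes "k \<ge> 1" and "a \<ge> 0" and "b \<ge> 0" and "c \<ge> 0" and "d \<ge> 0"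
    and sol: "is_solution k a b c d \<phi> \<phi>' \<psi> \<psi>'"
  shows "norm2 \<phi> \<psi> + norm2 \<phi>' \<psi>' = (2 * real k + 2) * P k a b c d \<phi> \<psi>
    \<and> norm2 \<phi> \<psi> - norm2 \<phi>' \<psi>' = 2 * P k a b c d \<phi> \<psi>
    \<and> norm2 \<phi>' \<psi>' = real k / (real k + 2) * norm2 \<phi> \<psi>
    \<and> P k a b c d \<phi> \<psi> = 1 / (real k + 2) * norm2 \<phi> \<psi>
    \<and> P k a b c d \<phi> \<psi> = 1 / real k * norm2 \<phi>' \<psi>'
    \<and> (\<not> (AE x in lborel. \<phi> x = 0 \<and> \<psi> x = 0) \<longrightarrow> in_calP k a b c d \<phi> \<psi>)"
proof -
  have k1: "k \<ge> 1" by (rule assms(1))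
  have H1\<phi>: "H1_with_deriv \<phi> \<phi>'" and H1\<psi>: "H1_with_deriv \<psi> \<psi>'"
    and eq\<phi>: "\<And>w w'. H1_with_deriv w w' \<Longrightarrow> integral\<^sup>L lborel (\<lambda>x. \<phi> x * w x + \<phi>' x * w' x - f k a b c d (\<phi> x) (\<psi> x) * w x) = 0"
    and eq\<psi>: "\<And>z z'. H1_with_deriv z z' \<Longrightarrow> integral\<^sup>L lborel (\<lambda>x. \<psi> x * z x + \<psi>' x * z' x - g k a b c d (\<phi> x) (\<psi> x) * z x) = 0"
    using sol unfolding is_solution_def by blast+
  have fE: "\<And>u v. f k a b c d u v = fe k a b c d u v" by (rule f_eq[OF k1])
  have gE: "\<And>u v. g k a b c d u v = ge k a b c d u v" by (rule g_eq[OF k1])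
  note F\<phi> = H1_facts[OF H1\<phi>] and F\<psi> = H1_facts[OF H1\<psi>]
  have [measurable]: "\<phi> \<in> borel_measurable borel" "\<phi>' \<in> borel_measurable borel"
    "\<psi> \<in> borel_measurable borel" "\<psi>' \<in> borel_measurable borel" using F\<phi> F\<psi> by auto
  obtain U1 where U1: "continuous_on UNIV U1" "AE x in lborel. \<phi> x = U1 x" "\<And>x y. x \<le> y \<Longrightarrow> U1 y - U1 x = integral {x..y} \<phi>'"
    using rep[OF F\<phi>(1) F\<phi>(2) F\<phi>(7)] by blast
  obtain W1 where W1: "continuous_on UNIV W1" "AE x in lborel. \<psi> x = W1 x" "\<And>x y. x \<le> y \<Longrightarrow> W1 y - W1 x = integral {x..y} \<psi>'"
    using rep[OF F\<psi>(1) F\<psi>(2) F\<psi>(7)] by blast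
  have [measurable]: "U1 \<in> borel_measurable borel" "W1 \<in> borel_measurable borel"
    using U1(1) W1(1) borel_measurable_continuous_onI by blast+
  define q1 where "q1 x = U1 x - fe k a b c d (U1 x) (W1 x)" for x
  define q2 where "q2 x = W1 x - ge k a b c d (U1 x) (W1 x)" for x
  have cq1: "continuous_on UNIV q1" unfolding q1_def fe_def by (intro continuous_intros U1(1) W1(1))
  have cq2: "continuous_on UNIV q2" unfolding q2_def ge_def by (intro continuous_intros U1(1) W1(1))
  have AEuw: "AE x in lborel. \<phi> x = U1 x \<and> \<psi> x = W1 x" using U1(2) W1(2) by eventually_elim auto
  have wk1: "integral\<^sup>L lborel (\<lambda>x. \<phi>' x * deriv w x) = - integral\<^sup>L lborel (\<lambda>x. q1 x * w x)" if w: "test_fun w" for w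
  proof -
    have [measurable]: "w \<in> borel_measurable borel" "deriv w \<in> borel_measurable borel"
      using test_meas[OF w] test_deriv_meas[OF w] by auto
    have "0 = integral\<^sup>L lborel (\<lambda>x. \<phi> x * w x + \<phi>' x * deriv w x - f k a b c d (\<phi> x) (\<psi> x) * w x)"
      using eq\<phi>[OF test_H1[OF w]] by simp
    also have "\<dots> = integral\<^sup>L lborel (\<lambda>x. \<phi>' x * deriv w x + q1 x * w x)"
    proof (rule integral_cong_AE)
      show "(\<lambda>x. \<phi> x * w x + \<phi>' x * deriv w x - f k a b c d (\<phi> x) (\<psi> x) * w x) \<in> borel_measurable lborel"
        unfolding fE fe_def by measurable
      show "(\<lambda>x. \<phi>' x * deriv w x + q1 x * w x) \<in> borel_measurable lborel"
        unfolding q1_def fe_def by measurable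
      show "AE x in lborel. \<phi> x * w x + \<phi>' x * deriv w x - f k a b c d (\<phi> x) (\<psi> x) * w x = \<phi>' x * deriv w x + q1 x * w x"
        using AEuw by eventually_elim (simp add: q1_def fE algebra_simps)
    qed
    also have "\<dots> = integral\<^sup>L lborel (\<lambda>x. \<phi>' x * deriv w x) + integral\<^sup>L lborel (\<lambda>x. q1 x * w x)"
      using loc_int_test_integrable(2)[OF F\<phi>(2) w] loc_int_test_integrable(1)[OF cont_loc_int[OF cq1] w] by simp
    finally show ?thesis by simp
  qed
  have wk2: "integral\<^sup>L lborel (\<lambda>x. \<psi>' x * deriv w x) = - integral\<^sup>L lborel (\<lambda>x. q2 x * w x)" if w: "test_fun w" for w
  proof -
    have [measurable]: "w \<in> borel_measurable borel" "deriv w \<in> borel_measurable borel"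
      using test_meas[OF w] test_deriv_meas[OF w] by auto
    have "0 = integral\<^sup>L lborel (\<lambda>x. \<psi> x * w x + \<psi>' x * deriv w x - g k a b c d (\<phi> x) (\<psi> x) * w x)"
      using eq\<psi>[OF test_H1[OF w]] by simp
    also have "\<dots> = integral\<^sup>L lborel (\<lambda>x. \<psi>' x * deriv w x + q2 x * w x)"
    proof (rule integral_cong_AE)
      show "(\<lambda>x. \<psi> x * w x + \<psi>' x * deriv w x - g k a b c d (\<phi> x) (\<psi> x) * w x) \<in> borel_measurable lborel"
        unfolding gE ge_def by measurable
      show "(\<lambda>x. \<psi>' x * deriv w x + q2 x * w x) \<in> borel_measurable lborel"
        unfolding q2_def ge_def by measurable
      show "AE x in lborel. \<psi> x * w x + \<psi>' x * deriv w x - g k a b c d (\<phi> x) (\<psi> x) * w x = \<psi>' x * deriv w x + q2 x * w x"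
        using AEuw by eventually_elim (simp add: q2_def gE algebra_simps)
    qed
    also have "\<dots> = integral\<^sup>L lborel (\<lambda>x. \<psi>' x * deriv w x) + integral\<^sup>L lborel (\<lambda>x. q2 x * w x)"
      using loc_int_test_integrable(2)[OF F\<psi>(2) w] loc_int_test_integrable(1)[OF cont_loc_int[OF cq2] w] by simp
    finally show ?thesis by simp
  qed
  obtain V1 where V1: "continuous_on UNIV V1" "AE x in lborel. \<phi>' x = V1 x" "\<And>x y. x \<le> y \<Longrightarrow> V1 y - V1 x = integral {x..y} q1"
    using rep[OF F\<phi>(2) cont_loc_int[OF cq1] wk1] by blast
  obtain V2 where V2: "continuous_on UNIV V2" "AE x in lborel. \<psi>' x = V2 x" "\<And>x y. x \<le> y \<Longrightarrow> V2 y - V2 x = integral {x..y} q2"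
    using rep[OF F\<psi>(2) cont_loc_int[OF cq2] wk2] by blast
  have [measurable]: "V1 \<in> borel_measurable borel" "V2 \<in> borel_measurable borel"
    using V1(1) V2(1) borel_measurable_continuous_onI by blast+
  have dV1: "\<And>x. (V1 has_real_derivative q1 x) (at x)" by (rule deriv_of_integral[OF cq1 V1(3)])
  have dV2: "\<And>x. (V2 has_real_derivative q2 x) (at x)" by (rule deriv_of_integral[OF cq2 V2(3)])
  have dU1: "\<And>x. (U1 has_real_derivative V1 x) (at x)"
  proof (rule deriv_of_integral[OF V1(1)])
    fix x y :: real assume "x \<le> y"
    then have "U1 y - U1 x = integral {x..y} \<phi>'" by (rule U1(3))
    also have "\<dots> = integral {x..y} V1" by (rule HK_cong_AE[OF F\<phi>(2) cont_loc_int[OF V1(1)] V1(2)])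
    finally show "U1 y - U1 x = integral {x..y} V1" .
  qed
  have dW1: "\<And>x. (W1 has_real_derivative V2 x) (at x)"
  proof (rule deriv_of_integral[OF V2(1)])
    fix x y :: real assume "x \<le> y"
    then have "W1 y - W1 x = integral {x..y} \<psi>'" by (rule W1(3))
    also have "\<dots> = integral {x..y} V2" by (rule HK_cong_AE[OF F\<psi>(2) cont_loc_int[OF V2(1)] V2(2)])
    finally show "W1 y - W1 x = integral {x..y} V2" .
  qed
  have eU1: "integral\<^sup>L lborel (\<lambda>x. (\<phi> x)^2) = integral\<^sup>L lborel (\<lambda>x. (U1 x)^2)"
    by (rule integral_cong_AE) (use U1(2) in auto)
  have eW1: "integral\<^sup>L lborel (\<lambda>x. (\<psi> x)^2) = integral\<^sup>L lborel (\<lambda>x. (W1 x)^2)"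
    by (rule integral_cong_AE) (use W1(2) in auto)
  have eV1: "integral\<^sup>L lborel (\<lambda>x. (\<phi>' x)^2) = integral\<^sup>L lborel (\<lambda>x. (V1 x)^2)"
    by (rule integral_cong_AE) (use V1(2) in auto)
  have eV2: "integral\<^sup>L lborel (\<lambda>x. (\<psi>' x)^2) = integral\<^sup>L lborel (\<lambda>x. (V2 x)^2)"
    by (rule integral_cong_AE) (use V2(2) in auto)
  have iU1: "integrable lborel (\<lambda>x. (U1 x)^2)"
    by (rule integrable_cong_AE_imp[OF F\<phi>(5)]) (use U1(2) in auto)
  have iW1: "integrable lborel (\<lambda>x. (W1 x)^2)"
    by (rule integrable_cong_AE_imp[OF F\<psi>(5)]) (use W1(2) in auto)
  have iV1: "integrable lborel (\<lambda>x. (V1 x)^2)"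
    by (rule integrable_cong_AE_imp[OF F\<phi>(6)]) (use V1(2) in auto)
  have iV2: "integrable lborel (\<lambda>x. (V2 x)^2)"
    by (rule integrable_cong_AE_imp[OF F\<psi>(6)]) (use V2(2) in auto)
  obtain B1 where B1: "\<And>x. \<bar>U1 x\<bar> \<le> B1" using sq_bound[OF dU1 V1(1) iU1 iV1] by blast
  obtain B2 where B2: "\<And>x. \<bar>W1 x\<bar> \<le> B2" using sq_bound[OF dW1 V2(1) iW1 iV2] by blast
  have mono: "integrable lborel (\<lambda>x. U1 x ^ i * W1 x ^ j)" if "i + j \<ge> 2" for i j
  proof (rule mono_integrable[of U1 W1 "max B1 B2"])
    show "\<bar>U1 x\<bar> \<le> max B1 B2" for x using B1[of x] by simp
    show "\<bar>W1 x\<bar> \<le> max B1 B2" for x using B2[of x] by simp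
  qed (use iU1 iW1 that in simp_all)
  obtain m where km: "k = Suc m" using k1 by (cases k) auto
  have iH: "integrable lborel (\<lambda>x. H k a b c d (U1 x) (W1 x))"
  proof -
    have "integrable lborel (\<lambda>x. a/(2*real k+2) * (U1 x^(2*k+2) * W1 x^0) + a/(2*real k+2) * (U1 x^0 * W1 x^(2*k+2))
       + b/(real k+1) * (U1 x^(k+1) * W1 x^(k+1)) + c/real k * (U1 x^(k+2) * W1 x^k) + d/real k * (U1 x^k * W1 x^(k+2)))"
      by (intro Bochner_Integration.integrable_add integrable_mult_right mono) simp_all
    moreover have "(\<lambda>x. H k a b c d (U1 x) (W1 x)) = (\<lambda>x. a/(2*real k+2) * (U1 x^(2*k+2) * W1 x^0) + a/(2*real k+2) * (U1 x^0 * W1 x^(2*k+2))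
       + b/(real k+1) * (U1 x^(k+1) * W1 x^(k+1)) + c/real k * (U1 x^(k+2) * W1 x^k) + d/real k * (U1 x^k * W1 x^(k+2)))"
      by (rule ext) (simp add: H_def power_mult_distrib algebra_simps)
    ultimately show ?thesis by simp
  qed
  have iF: "integrable lborel (\<lambda>x. fe k a b c d (U1 x) (W1 x) * U1 x)"
  proof -
    have "integrable lborel (\<lambda>x. a * (U1 x^(2*k+2) * W1 x^0) + b * (U1 x^(k+1) * W1 x^(k+1))
       + c * (real k + 2) / real k * (U1 x^(k+2) * W1 x^k) + d * (U1 x^k * W1 x^(k+2)))"
      by (intro Bochner_Integration.integrable_add integrable_mult_right mono) simp_all
    moreover have "(\<lambda>x. fe k a b c d (U1 x) (W1 x) * U1 x) = (\<lambda>x. a * (U1 x^(2*k+2) * W1 x^0) + b * (U1 x^(k+1) * W1 x^(k+1))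
       + c * (real k + 2) / real k * (U1 x^(k+2) * W1 x^k) + d * (U1 x^k * W1 x^(k+2)))"
      by (rule ext) (simp add: fe_def km algebra_simps)
    ultimately show ?thesis by simp
  qed
  have iG: "integrable lborel (\<lambda>x. ge k a b c d (U1 x) (W1 x) * W1 x)"
  proof -
    have "integrable lborel (\<lambda>x. a * (U1 x^0 * W1 x^(2*k+2)) + b * (U1 x^(k+1) * W1 x^(k+1))
       + c * (U1 x^(k+2) * W1 x^k) + d * (real k + 2) / real k * (U1 x^k * W1 x^(k+2)))"
      by (intro Bochner_Integration.integrable_add integrable_mult_right mono) simp_all
    moreover have "(\<lambda>x. ge k a b c d (U1 x) (W1 x) * W1 x) = (\<lambda>x. a * (U1 x^0 * W1 x^(2*k+2)) + b * (U1 x^(k+1) * W1 x^(k+1))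
       + c * (U1 x^(k+2) * W1 x^k) + d * (real k + 2) / real k * (U1 x^k * W1 x^(k+2)))"
      by (rule ext) (simp add: ge_def km algebra_simps)
    ultimately show ?thesis by simp
  qed
  define E where "E x = (V1 x)^2 + (V2 x)^2 - (U1 x)^2 - (W1 x)^2 + 2 * H k a b c d (U1 x) (W1 x)" for x
  have dE: "(E has_real_derivative 0) (at x)" for x
  proof -
    have h: "((\<lambda>x. H k a b c d (U1 x) (W1 x)) has_real_derivative
        fe k a b c d (U1 x) (W1 x) * V1 x + ge k a b c d (U1 x) (W1 x) * V2 x) (at x)"
      by (rule H_chain[OF k1 dU1 dW1])
    have "(E has_real_derivative
        2 * V1 x * q1 x + 2 * V2 x * q2 x - 2 * U1 x * V1 x - 2 * W1 x * V2 x
        + 2 * (fe k a b c d (U1 x) (W1 x) * V1 x + ge k a b c d (U1 x) (W1 x) * V2 x)) (at x)"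
      unfolding E_def
      by (intro DERIV_add DERIV_diff DERIV_cmult sq_deriv dV1 dV2 dU1 dW1 h)
    moreover have "2 * V1 x * q1 x + 2 * V2 x * q2 x - 2 * U1 x * V1 x - 2 * W1 x * V2 x
        + 2 * (fe k a b c d (U1 x) (W1 x) * V1 x + ge k a b c d (U1 x) (W1 x) * V2 x) = 0"
      by (simp add: q1_def q2_def algebra_simps)
    ultimately show ?thesis by simp
  qed
  have iE: "integrable lborel E" unfolding E_def
    by (intro Bochner_Integration.integrable_add Bochner_Integration.integrable_diff integrable_mult_right iV1 iV2 iU1 iW1 iH)
  have Ec: "E x = E 0" for x by (rule DERIV_isconst_all) (use dE in blast)
  have "E = (\<lambda>x. E 0)" using Ec by (simp add: fun_eq_iff)
  then have "integrable lborel (\<lambda>x::real. E 0)" using iE by simp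
  then have E0: "E 0 = 0" by (rule const_int_zero)
  have "E = (\<lambda>x. 0)" by (rule ext) (use Ec E0 in simp)
  then have IE: "integral\<^sup>L lborel E = 0" by simp
  have IE2: "integral\<^sup>L lborel E = integral\<^sup>L lborel (\<lambda>x. (V1 x)^2) + integral\<^sup>L lborel (\<lambda>x. (V2 x)^2)
      - integral\<^sup>L lborel (\<lambda>x. (U1 x)^2) - integral\<^sup>L lborel (\<lambda>x. (W1 x)^2)
      + 2 * integral\<^sup>L lborel (\<lambda>x. H k a b c d (U1 x) (W1 x))"
    unfolding E_def using iV1 iV2 iU1 iW1 iH by simp
  have eP: "P k a b c d \<phi> \<psi> = integral\<^sup>L lborel (\<lambda>x. H k a b c d (U1 x) (W1 x))"
    unfolding P_def
  proof (rule integral_cong_AE)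
    show "(\<lambda>x. H k a b c d (\<phi> x) (\<psi> x)) \<in> borel_measurable lborel" unfolding H_def by measurable
    show "(\<lambda>x. H k a b c d (U1 x) (W1 x)) \<in> borel_measurable lborel" unfolding H_def by measurable
    show "AE x in lborel. H k a b c d (\<phi> x) (\<psi> x) = H k a b c d (U1 x) (W1 x)"
      using AEuw by eventually_elim simp
  qed
  define N where "N = norm2 \<phi> \<psi>"
  define D where "D = norm2 \<phi>' \<psi>'"
  define PP where "PP = P k a b c d \<phi> \<psi>"
  have N: "N = integral\<^sup>L lborel (\<lambda>x. (U1 x)^2) + integral\<^sup>L lborel (\<lambda>x. (W1 x)^2)"
    unfolding N_def norm2_def eU1 eW1 ..
  have D: "D = integral\<^sup>L lborel (\<lambda>x. (V1 x)^2) + integral\<^sup>L lborel (\<lambda>x. (V2 x)^2)"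
    unfolding D_def norm2_def eV1 eV2 ..
  have ii: "N - D = 2 * PP" using IE IE2 N D eP unfolding PP_def by simp
  have t1: "integral\<^sup>L lborel (\<lambda>x. (U1 x)^2) + integral\<^sup>L lborel (\<lambda>x. (V1 x)^2) = integral\<^sup>L lborel (\<lambda>x. fe k a b c d (U1 x) (W1 x) * U1 x)"
  proof -
    have "0 = integral\<^sup>L lborel (\<lambda>x. \<phi> x * \<phi> x + \<phi>' x * \<phi>' x - f k a b c d (\<phi> x) (\<psi> x) * \<phi> x)"
      using eq\<phi>[OF H1\<phi>] by simp
    also have "\<dots> = integral\<^sup>L lborel (\<lambda>x. (U1 x)^2 + (V1 x)^2 - fe k a b c d (U1 x) (W1 x) * U1 x)"
    proof (rule integral_cong_AE)
      show "(\<lambda>x. \<phi> x * \<phi> x + \<phi>' x * \<phi>' x - f k a b c d (\<phi> x) (\<psi> x) * \<phi> x) \<in> borel_measurable lborel"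
        unfolding fE fe_def by measurable
      show "(\<lambda>x. (U1 x)^2 + (V1 x)^2 - fe k a b c d (U1 x) (W1 x) * U1 x) \<in> borel_measurable lborel"
        unfolding fe_def by measurable
      show "AE x in lborel. \<phi> x * \<phi> x + \<phi>' x * \<phi>' x - f k a b c d (\<phi> x) (\<psi> x) * \<phi> x = (U1 x)^2 + (V1 x)^2 - fe k a b c d (U1 x) (W1 x) * U1 x"
        using AEuw V1(2) by eventually_elim (simp add: fE power2_eq_square)
    qed
    also have "\<dots> = integral\<^sup>L lborel (\<lambda>x. (U1 x)^2) + integral\<^sup>L lborel (\<lambda>x. (V1 x)^2) - integral\<^sup>L lborel (\<lambda>x. fe k a b c d (U1 x) (W1 x) * U1 x)"
      using iU1 iV1 iF by simp
    finally show ?thesis by simp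
  qed
  have t2: "integral\<^sup>L lborel (\<lambda>x. (W1 x)^2) + integral\<^sup>L lborel (\<lambda>x. (V2 x)^2) = integral\<^sup>L lborel (\<lambda>x. ge k a b c d (U1 x) (W1 x) * W1 x)"
  proof -
    have "0 = integral\<^sup>L lborel (\<lambda>x. \<psi> x * \<psi> x + \<psi>' x * \<psi>' x - g k a b c d (\<phi> x) (\<psi> x) * \<psi> x)"
      using eq\<psi>[OF H1\<psi>] by simp
    also have "\<dots> = integral\<^sup>L lborel (\<lambda>x. (W1 x)^2 + (V2 x)^2 - ge k a b c d (U1 x) (W1 x) * W1 x)"
    proof (rule integral_cong_AE)
      show "(\<lambda>x. \<psi> x * \<psi> x + \<psi>' x * \<psi>' x - g k a b c d (\<phi> x) (\<psi> x) * \<psi> x) \<in> borel_measurable lborel"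
        unfolding gE ge_def by measurable
      show "(\<lambda>x. (W1 x)^2 + (V2 x)^2 - ge k a b c d (U1 x) (W1 x) * W1 x) \<in> borel_measurable lborel"
        unfolding ge_def by measurable
      show "AE x in lborel. \<psi> x * \<psi> x + \<psi>' x * \<psi>' x - g k a b c d (\<phi> x) (\<psi> x) * \<psi> x = (W1 x)^2 + (V2 x)^2 - ge k a b c d (U1 x) (W1 x) * W1 x"
        using AEuw V2(2) by eventually_elim (simp add: gE power2_eq_square)
    qed
    also have "\<dots> = integral\<^sup>L lborel (\<lambda>x. (W1 x)^2) + integral\<^sup>L lborel (\<lambda>x. (V2 x)^2) - integral\<^sup>L lborel (\<lambda>x. ge k a b c d (U1 x) (W1 x) * W1 x)"
      using iW1 iV2 iG by simp
    finally show ?thesis by simp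
  qed
  have t3: "integral\<^sup>L lborel (\<lambda>x. fe k a b c d (U1 x) (W1 x) * U1 x) + integral\<^sup>L lborel (\<lambda>x. ge k a b c d (U1 x) (W1 x) * W1 x)
      = (2 * real k + 2) * integral\<^sup>L lborel (\<lambda>x. H k a b c d (U1 x) (W1 x))"
  proof -
    have "integral\<^sup>L lborel (\<lambda>x. fe k a b c d (U1 x) (W1 x) * U1 x) + integral\<^sup>L lborel (\<lambda>x. ge k a b c d (U1 x) (W1 x) * W1 x)
        = integral\<^sup>L lborel (\<lambda>x. fe k a b c d (U1 x) (W1 x) * U1 x + ge k a b c d (U1 x) (W1 x) * W1 x)"
      using iF iG by simp
    also have "\<dots> = integral\<^sup>L lborel (\<lambda>x. (2 * real k + 2) * H k a b c d (U1 x) (W1 x))"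
      using euler[OF k1] by (simp add: mult.commute)
    also have "\<dots> = (2 * real k + 2) * integral\<^sup>L lborel (\<lambda>x. H k a b c d (U1 x) (W1 x))" by simp
    finally show ?thesis .
  qed
  have i: "N + D = (2 * real k + 2) * PP" using t1 t2 t3 N D eP unfolding PP_def by simp
  have kpos: "real k > 0" using k1 by simp
  have NP: "N = (real k + 2) * PP" using i ii by (simp add: algebra_simps)
  have DP: "D = real k * PP" using i ii by (simp add: algebra_simps)
  have iii: "D = real k / (real k + 2) * N" using NP DP kpos by (simp add: field_simps)
  have iv: "PP = 1 / (real k + 2) * N" using NP kpos by (simp add: field_simps)
  have v: "PP = 1 / real k * D" using DP kpos by (simp add: field_simps)
  have vi: "in_calP k a b c d \<phi> \<psi>" if nt: "\<not> (AE x in lborel. \<phi> x = 0 \<and> \<psi> x = 0)"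
  proof -
    have H1s: "H1 \<phi>" "H1 \<psi>" using H1\<phi> H1\<psi> unfolding H1_def by blast+
    have iS: "integrable lborel (\<lambda>x. (\<phi> x)^2 + (\<psi> x)^2)" using F\<phi>(5) F\<psi>(5) by simp
    have Neq: "N = integral\<^sup>L lborel (\<lambda>x. (\<phi> x)^2 + (\<psi> x)^2)"
      unfolding N_def norm2_def using F\<phi>(5) F\<psi>(5) by simp
    have "N \<ge> 0" unfolding Neq by (rule integral_nonneg_AE) simp
    moreover have "N \<noteq> 0"
    proof
      assume "N = 0"
      then have "AE x in lborel. (\<phi> x)^2 + (\<psi> x)^2 = 0"
        using integral_nonneg_eq_0_iff_AE[OF iS] Neq by simp
      then have "AE x in lborel. \<phi> x = 0 \<and> \<psi> x = 0" by eventually_elim (simp add: add_nonneg_eq_0_iff)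
      then show False using nt by blast
    qed
    ultimately have "N > 0" by simp
    then have "PP > 0" using iv by simp
    then show ?thesis unfolding in_calP_def PP_def using H1s nt by blast
  qed
  show ?thesis using i ii iii iv v vi unfolding N_def D_def PP_def by blast
qed

end
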